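(* Let $N\ge1$, $\tau=T/N$, and assume that $Q$ commutes with $M$. Let $v,u_0\in(T_\tau Q^{1/2})(\mathbb V)$. Then there is a constant $C$ depending on $T$, $\|Q^{-1/2}v\|_{\mathcal D(M)}$ and $\|Q^{-1/2}u_0\|_{\mathcal D(M)}$ such that $$|I_T^{u_0}(v)-I_{T,N}^{u_0}(v)|\le C\tau^{1/2}.$$ If in addition $Q^{-1/2}v,\ Q^{-1/2}u_0\in\mathcal D(M^2)$, then there is a constant $C$ depending on $T$, $\|Q^{-1/2}v\|_{\mathcal D(M^2)}$ and $\|Q^{-1/2}u_0\|_{\mathcal D(M^2)}$ such that $|I_T^{u_0}(v)-I_{T,N}^{u_0}(v)|\le C\tau$.
   Context: $T>0$. $D\subset\mathbb R^3$ is a cuboid; $\varepsilon,\mu\in L^\infty(D)$ with $\varepsilon,\mu\ge\delta>0$. $\mathbb V=L^2(D)^3\times L^2(D)^3$ with inner product $\int_D(\varepsilon\mathbf E_1\cdot\mathbf E_2+\mu\mathbf H_1\cdot\mathbf H_2)\,\mathrm d\mathbf x$. $M(\mathbf E,\mathbf H)=(\varepsilon^{-1}\nabla\times\mathbf H,-\mu^{-1}\nabla\times\mathbf E)$ with domain $\mathcal D(M)=H_0(\mathrm{curl},D)\times H(\mathrm{curl},D)$ (perfect-conductor condition $\mathbf n\times\mathbf E=0$ on $\partial D$) is skew-adjoint on $\mathbb V$ and generates the unitary $C_0$-group $\{S(t)\}$; $\mathcal D(M^k)$ has graph norm $\|v\|^2_{\mathcal D(M^k)}=\sum_{j\le k}\|M^jv\|^2_{\mathbb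 V}$. $Q=\mathrm{diag}(\varepsilon^{-1}Q_e,\mu^{-1}Q_m)$ is a symmetric positive definite trace-class operator on $\mathbb V$ (the covariance of the noise); "$Q$ commutes with $M$" means $Q$ maps $\mathcal D(M)$ into itself and $QMw=MQw$ for $w\in\mathcal D(M)$. $Q^{-1/2}$ denotes the pseudo-inverse of $Q^{1/2}$. $T_\tau=(I-\frac\tau2M)^{-1}$, $S_\tau=(I-\frac\tau2M)^{-1}(I+\frac\tau2M)$. With $Q_T=\int_0^TS(r)QS(r)^*\,\mathrm dr$ and $Q_{T;N}=\tau\sum_{j=1}^N(S_\tau^{N-j}T_\tau)Q(S_\tau^{N-j}T_\tau)^*$ (pseudo-inverses of their square roots denoted by exponent $-1/2$), the rate functions are $I_T^{u_0}(v)=\frac12\|Q_T^{-1/2}(v-S(T)u_0)\|_{\mathbb V}^2$ if $v-S(T)u_0\in Q_T^{1/2}(\mathbb V)$ and $+\infty$ otherwise, and $I_{T,N}^{u_0}(v)=\frac12\|Q_{T;N}^{-1/2}(v-S_\tau^Nu_0)\|_{\mathbb V}^2$ if $v-S_\tau^Nu_0\in Q_{T;N}^{1/2}(\mathbb V)$ and $+\infty$ otherwise (these are the large deviation rate functions of the exact solution at time $T$ and of the midpoint approximation $u^N$ for the noise $\sqrt\lambda W$, $\lambda\to0$). *)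

theory Defs
  imports "HOL-Analysis.Analysis" "HOL-Library.Extended_Real"
begin

text \<open>Abstract setting: the real Hilbert space V is a type 'v of class real_inner + complete_space
(its inner product plays the role of the weighted L2 inner product).  The unbounded operator M is
given by its domain DM and a function M (values outside DM are irrelevant).\<close>

definition skew_adjoint :: "('v::{real_inner,complete_space} \<Rightarrow> 'v) \<Rightarrow> 'v set \<Rightarrow> bool" where
  "skew_adjoint M DM \<longleftrightarrow>
     subspace DM \<and> closure DM = UNIV \<and>
     (\<forall>x\<in>DM. \<forall>y\<in>DM. M (x + y) = M x + M y) \<and>
     (\<forall>x\<in>DM. \<forall>c. M (c *\<^sub>R x) = c *\<^sub>R M x) \<and>
     (\<forall>y. y \<in> DM \<longleftrightarrow> (\<exists>z. \<forall>x\<in>DM. inner (M x) y = inner x z)) \<and>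
     (\<forall>x\<in>DM. \<forall>y\<in>DM. inner (M x) y = - inner x (M y))"

definition unitary_group_generated_by ::
  "(real \<Rightarrow> 'v::{real_inner,complete_space} \<Rightarrow> 'v) \<Rightarrow> ('v \<Rightarrow> 'v) \<Rightarrow> 'v set \<Rightarrow> bool" where
  "unitary_group_generated_by S M DM \<longleftrightarrow>
     (\<forall>t. bounded_linear (S t)) \<and> S 0 = id \<and> (\<forall>s t. S (s + t) = S s \<circ> S t) \<and>
     (\<forall>t x. norm (S t x) = norm x) \<and>
     (\<forall>x. continuous_on UNIV (\<lambda>t. S t x)) \<and>
     (\<forall>x. x \<in> DM \<longleftrightarrow> (\<exists>y. ((\<lambda>h. (1 / h) *\<^sub>R (S h x - x)) \<longlongrightarrow> y) (at_right 0))) \<and>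
     (\<forall>x\<in>DM. ((\<lambda>h. (1 / h) *\<^sub>R (S h x - x)) \<longlongrightarrow> M x) (at_right 0))"

definition adj :: "('v::{real_inner,complete_space} \<Rightarrow> 'v) \<Rightarrow> 'v \<Rightarrow> 'v" where
  "adj A y = (THE z. \<forall>x. inner (A x) y = inner x z)"

definition symmetric_op :: "('v::real_inner \<Rightarrow> 'v) \<Rightarrow> bool" where
  "symmetric_op A \<longleftrightarrow> (\<forall>x y. inner (A x) y = inner x (A y))"

definition pos_def_op :: "('v::real_inner \<Rightarrow> 'v) \<Rightarrow> bool" where
  "pos_def_op A \<longleftrightarrow> (\<forall>x. x \<noteq> 0 \<longrightarrow> inner (A x) x > 0)"

text \<open>Orthonormal (Hilbert) basis and trace class for a positive operator:
  the trace sum over some orthonormal basis is finite (basis-independent for positive operators).\<close>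
definition hilbert_basis :: "'v::real_inner set \<Rightarrow> bool" where
  "hilbert_basis B \<longleftrightarrow> (\<forall>e\<in>B. norm e = 1) \<and> (\<forall>e\<in>B. \<forall>f\<in>B. e \<noteq> f \<longrightarrow> inner e f = 0)
      \<and> closure (span B) = UNIV"

definition trace_class_pos :: "('v::real_inner \<Rightarrow> 'v) \<Rightarrow> bool" where
  "trace_class_pos A \<longleftrightarrow> (\<exists>B. hilbert_basis B \<and> (\<lambda>e. inner (A e) e) summable_on B)"

definition op_sqrt :: "('v::{real_inner,complete_space} \<Rightarrow> 'v) \<Rightarrow> 'v \<Rightarrow> 'v" where
  "op_sqrt A = (THE R. bounded_linear R \<and> symmetric_op R \<and> (\<forall>x. inner (R x) x \<ge> 0)
                 \<and> (\<forall>x. R (R x) = A x))"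

definition pinv :: "('v::real_inner \<Rightarrow> 'v) \<Rightarrow> 'v \<Rightarrow> 'v" where
  "pinv R w = (THE x. R x = w \<and> (\<forall>y. R y = 0 \<longrightarrow> inner x y = 0))"

definition commutes_with :: "('v \<Rightarrow> 'v) \<Rightarrow> ('v \<Rightarrow> 'v) \<Rightarrow> 'v set \<Rightarrow> bool" where
  "commutes_with Q M DM \<longleftrightarrow> Q ` DM \<subseteq> DM \<and> (\<forall>w\<in>DM. Q (M w) = M (Q w))"

definition Ttau :: "('v::real_vector \<Rightarrow> 'v) \<Rightarrow> 'v set \<Rightarrow> real \<Rightarrow> 'v \<Rightarrow> 'v" where
  "Ttau M DM \<tau> x = (THE y. y \<in> DM \<and> y - (\<tau> / 2) *\<^sub>R M y = x)"

definition Stau :: "('v::real_vector \<Rightarrow> 'v) \<Rightarrow> 'v set \<Rightarrow> real \<Rightarrow> 'v \<Rightarrow> 'v" where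
  "Stau M DM \<tau> x = Ttau M DM \<tau> (x + (\<tau> / 2) *\<^sub>R M x)"

definition QT :: "(real \<Rightarrow> 'v::{real_inner,complete_space} \<Rightarrow> 'v) \<Rightarrow> ('v \<Rightarrow> 'v) \<Rightarrow> real \<Rightarrow> 'v \<Rightarrow> 'v" where
  "QT S Q T x = integral {0..T} (\<lambda>r. S r (Q (adj (S r) x)))"

definition QTN :: "('v::{real_inner,complete_space} \<Rightarrow> 'v) \<Rightarrow> 'v set \<Rightarrow> ('v \<Rightarrow> 'v) \<Rightarrow> real \<Rightarrow> nat \<Rightarrow> 'v \<Rightarrow> 'v" where
  "QTN M DM Q T N x =
     (let \<tau> = T / real N;
          A = (\<lambda>j. (Stau M DM \<tau> ^^ (N - j)) \<circ> Ttau M DM \<tau>)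
      in \<tau> *\<^sub>R (\<Sum>j=1..N. A j (Q (adj (A j) x))))"

definition rate :: "('v::real_inner \<Rightarrow> 'v) \<Rightarrow> 'v \<Rightarrow> ereal" where
  "rate R w = (if w \<in> range R then ereal ((1/2) * (norm (pinv R w))\<^sup>2) else \<infinity>)"

definition rate_exact :: "(real \<Rightarrow> 'v::{real_inner,complete_space} \<Rightarrow> 'v) \<Rightarrow> ('v \<Rightarrow> 'v) \<Rightarrow> real \<Rightarrow> 'v \<Rightarrow> 'v \<Rightarrow> ereal" where
  "rate_exact S Q T u0 v = rate (op_sqrt (QT S Q T)) (v - S T u0)"

definition rate_midpoint :: "('v::{real_inner,complete_space} \<Rightarrow> 'v) \<Rightarrow> 'v set \<Rightarrow> ('v \<Rightarrow> 'v) \<Rightarrow> real \<Rightarrow> nat \<Rightarrow> 'v \<Rightarrow> 'v \<Rightarrow> ereal" where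
  "rate_midpoint M DM Q T N u0 v =
     rate (op_sqrt (QTN M DM Q T N)) (v - (Stau M DM (T / real N) ^^ N) u0)"

definition graph_norm1 :: "('v::real_normed_vector \<Rightarrow> 'v) \<Rightarrow> 'v \<Rightarrow> real" where
  "graph_norm1 M x = sqrt ((norm x)\<^sup>2 + (norm (M x))\<^sup>2)"

definition graph_norm2 :: "('v::real_normed_vector \<Rightarrow> 'v) \<Rightarrow> 'v \<Rightarrow> real" where
  "graph_norm2 M x = sqrt ((norm x)\<^sup>2 + (norm (M x))\<^sup>2 + (norm (M (M x)))\<^sup>2)"

definition dom_M2 :: "('v \<Rightarrow> 'v) \<Rightarrow> 'v set \<Rightarrow> 'v set" where
  "dom_M2 M DM = {x \<in> DM. M x \<in> DM}"

end

theory Submission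
  imports Defs
begin

definition pos_op :: "('v::real_inner \<Rightarrow> 'v) \<Rightarrow> bool" where
  "pos_op A \<longleftrightarrow> (\<forall>x. 0 \<le> inner (A x) x)"

lemma quad_discr:
  fixes a b c :: real
  assumes h: "\<And>t. 0 \<le> a + 2*b*t + c*t^2" and c0: "0 \<le> c"
  shows "b^2 \<le> a*c"
proof (cases "c = 0")
  case True
  show ?thesis
  proof (cases "b = 0")
    case True then show ?thesis using h[of 0] c0 by simp
  next
    case False
    have "0 \<le> a + 2*b*(-(a+1)/(2*b)) + c*(-(a+1)/(2*b))^2" by (rule h)
    then show ?thesis using False \<open>c = 0\<close> by (simp add: field_simps)
  qed
next
  case False
  then have cp: "c > 0" using c0 by simp
  have "0 \<le> a + 2*b*(-b/c) + c*(-b/c)^2" by (rule h)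
  also have "\<dots> = a - b^2/c" using cp by (simp add: field_simps power2_eq_square)
  finally have "b^2/c \<le> a" by simp
  then show ?thesis using cp by (simp add: field_simps mult.commute)
qed

lemma real_sq_cancel:
  fixes a b :: real
  assumes "a^2 * a^2 \<le> b^2 * a^2" "0 \<le> a" "0 \<le> b"
  shows "a \<le> b"
proof (cases "a = 0")
  case True then show ?thesis using assms by simp
next
  case False
  then have "0 < a^2" by simp
  then have "a^2 \<le> b^2" using assms(1) mult_le_cancel_right_pos by blast
  then show ?thesis using assms by (simp add: power2_le_iff_abs_le)
qed

lemma pos_cs:
  assumes bl: "bounded_linear A" and sy: "symmetric_op A" and po: "pos_op A"
  shows "(inner (A x) y)^2 \<le> inner (A x) x * inner (A y) y"
proof -
  interpret A: bounded_linear A by (rule bl)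
  have sym: "inner (A y) x = inner (A x) y"
    using sy unfolding symmetric_op_def by (metis inner_commute)
  have "(inner (A x) y)^2 \<le> inner (A x) x * inner (A y) y"
  proof (rule quad_discr)
    fix t :: real
    have "0 \<le> inner (A (x + t *\<^sub>R y)) (x + t *\<^sub>R y)" using po unfolding pos_op_def by blast
    also have "\<dots> = inner (A x) x + 2 * inner (A x) y * t + inner (A y) y * t^2"
      by (simp add: A.add A.scaleR inner_add_left inner_add_right sym power2_eq_square algebra_simps)
    finally show "0 \<le> inner (A x) x + 2 * inner (A x) y * t + inner (A y) y * t^2" .
  next
    show "0 \<le> inner (A y) y" using po unfolding pos_op_def by blast
  qed
  then show ?thesis .
qed

lemma pos_zero:
  assumes bl: "bounded_linear A" and sy: "symmetric_op A" and po: "pos_op A"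
    and z: "inner (A x) x = 0"
  shows "A x = 0"
proof -
  have "(inner (A x) (A x))^2 \<le> 0" using pos_cs[OF bl sy po, of x "A x"] z by simp
  then show ?thesis by simp
qed

lemma pos_le_id_norm:
  assumes bl: "bounded_linear A" and sy: "symmetric_op A" and po: "pos_op A"
    and le: "\<And>x. inner (A x) x \<le> inner x x"
  shows "norm (A x) \<le> norm x"
proof -
  have "(inner (A x) (A x))^2 \<le> inner (A x) x * inner (A (A x)) (A x)"
    by (rule pos_cs[OF bl sy po])
  also have "\<dots> \<le> inner x x * inner (A x) (A x)"
    using le[of x] le[of "A x"] po unfolding pos_op_def
    by (intro mult_mono) auto
  finally have "(norm (A x))^2 * (norm (A x))^2 \<le> (norm x)^2 * (norm (A x))^2"
    by (simp only: power2_norm_eq_inner[symmetric] power2_eq_square)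
  then show ?thesis by (rule real_sq_cancel) auto
qed


lemma parallelogram_norm:
  fixes a b :: "'v::real_inner"
  shows "(norm (a + b))^2 + (norm (a - b))^2 = 2*(norm a)^2 + 2*(norm b)^2"
  by (simp add: power2_norm_eq_inner inner_add_left inner_add_right inner_diff_left inner_diff_right inner_commute)

lemma projection_exists:
  fixes L :: "'v::{real_inner,complete_space} set"
  assumes sL: "subspace L" and cL: "closed L"
  shows "\<exists>p\<in>L. \<forall>l\<in>L. inner (z - p) l = 0"
proof -
  have ne: "L \<noteq> {}" using sL subspace_0 by blast
  define d where "d = infdist z L"
  have d0: "0 \<le> d" unfolding d_def by (rule infdist_nonneg)
  have dle: "d \<le> norm (z - l)" if "l \<in> L" for l
    using infdist_le[OF that, of z] by (simp add: d_def dist_norm)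
  have near: "\<exists>l\<in>L. norm (z - l) < d + e" if "e > 0" for e
  proof (rule ccontr)
    assume "\<not> ?thesis"
    then have "\<forall>l\<in>L. d + e \<le> dist z l" by (auto simp: dist_norm not_less)
    then have "d + e \<le> infdist z L" unfolding infdist_notempty[OF ne] by (intro cINF_greatest ne) auto
    then show False using that d_def by simp
  qed
  have "\<forall>n::nat. \<exists>l\<in>L. norm (z - l) < d + 1/(real n + 1)"
    using near by simp
  then obtain p where pL: "\<And>n. p n \<in> L" and pn: "\<And>n. norm (z - p n) < d + 1/(real n + 1)"
    by metis
  have key: "(norm (p m - p n))^2 \<le> (4*d+2) * (1/(real m + 1) + 1/(real n + 1))" for m n
  proof -
    define em where "em = 1/(real m + 1)"
    define en where "en = 1/(real n + 1)"
    have em: "0 < em" "em \<le> 1" unfolding em_def by (auto simp: field_simps)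
    have en: "0 < en" "en \<le> 1" unfolding en_def by (auto simp: field_simps)
    have mid: "(1/2) *\<^sub>R (p m + p n) \<in> L"
      using pL sL by (simp add: subspace_add subspace_scale)
    have "d \<le> norm (z - (1/2) *\<^sub>R (p m + p n))" using dle[OF mid] .
    then have "(2*d)^2 \<le> (norm ((z - p m) + (z - p n)))^2"
    proof -
      have "(z - p m) + (z - p n) = 2 *\<^sub>R (z - (1/2) *\<^sub>R (p m + p n))"
        by (simp add: scaleR_right_diff_distrib scaleR_2)
      then have "norm ((z - p m) + (z - p n)) = 2 * norm (z - (1/2) *\<^sub>R (p m + p n))" by simp
      then show ?thesis using \<open>d \<le> _\<close> d0 by (simp add: power_mono)
    qed
    moreover have "(norm ((z - p m) + (z - p n)))^2 + (norm ((z - p m) - (z - p n)))^2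
        = 2*(norm (z - p m))^2 + 2*(norm (z - p n))^2" by (rule parallelogram_norm)
    moreover have "(norm (z - p m))^2 \<le> (d + em)^2"
      using pn[of m] em_def by (intro power_mono) auto
    moreover have "(norm (z - p n))^2 \<le> (d + en)^2"
      using pn[of n] en_def by (intro power_mono) auto
    moreover have "(z - p m) - (z - p n) = - (p m - p n)" by simp
    ultimately have "(norm (p m - p n))^2 \<le> 2*(d+em)^2 + 2*(d+en)^2 - (2*d)^2"
      by (simp only: norm_minus_cancel)
    also have "\<dots> = 4*d*(em + en) + 2*em*em + 2*en*en" by (simp add: power2_eq_square algebra_simps)
    also have "\<dots> \<le> 4*d*(em+en) + 2*em + 2*en"
      using em en by (intro add_mono) (auto simp: mult_le_cancel_left1)
    also have "\<dots> = (4*d+2)*(em+en)" by (simp add: algebra_simps)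
    finally show ?thesis unfolding em_def en_def .
  qed
  have "Cauchy p"
  proof (rule CauchyI)
    fix e :: real assume e: "0 < e"
    obtain K :: nat where K: "real K > 2*(4*d+2)/(e^2)" using reals_Archimedean2 by blast
    show "\<exists>K. \<forall>m\<ge>K. \<forall>n\<ge>K. norm (p m - p n) < e"
    proof (intro exI allI impI)
      fix m n assume m: "K \<le> m" and n: "K \<le> n"
      have "1/(real m + 1) \<le> 1/(real K + 1)" using m by (simp add: frac_le)
      moreover have "1/(real n + 1) \<le> 1/(real K + 1)" using n by (simp add: frac_le)
      ultimately have "(4*d+2) * (1/(real m + 1) + 1/(real n + 1)) \<le> (4*d+2) * (2/(real K + 1))"
        using d0 by (intro mult_left_mono) auto
      then have "(norm (p m - p n))^2 \<le> (4*d+2) * (2/(real K + 1))"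
        using key[of m n] by linarith
      also have "\<dots> < e^2"
      proof -
        have "2*(4*d+2) < e^2 * real K" using K e by (simp add: field_simps)
        moreover have "0 < e^2" using e by simp
        ultimately have "2*(4*d+2) < e^2 * (real K + 1)" by (simp only: distrib_left mult_1_right)
        have "(4*d+2)*(2/(real K+1)) = (2*(4*d+2))/(real K + 1)" by simp
        also have "\<dots> < e^2" using \<open>2*(4*d+2) < e^2 * (real K + 1)\<close>
          by (subst pos_divide_less_eq) auto
        finally show ?thesis .
      qed
      finally have "(norm (p m - p n))^2 < e^2" .
      moreover have "0 \<le> e" using e by simp
      ultimately show "norm (p m - p n) < e" by (rule power_less_imp_less_base)
    qed
  qed
  then obtain p0 where lim: "p \<longlonglongrightarrow> p0" using Cauchy_convergent_iff convergent_def by blast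
  have p0L: "p0 \<in> L" using cL pL lim closed_sequentially by blast
  have "norm (z - p0) \<le> d"
  proof -
    have t1: "(\<lambda>n. norm (z - p n)) \<longlonglongrightarrow> norm (z - p0)" by (intro tendsto_intros lim)
    have t2: "(\<lambda>n. d + 1/(real n + 1)) \<longlonglongrightarrow> d + 0"
    proof (intro tendsto_intros)
      have "(\<lambda>n. 1/(real n + 1)) = (\<lambda>n. inverse (real (Suc n)))"
        by (simp add: fun_eq_iff inverse_eq_divide)
      then show "(\<lambda>n. 1/(real n + 1)) \<longlonglongrightarrow> 0" using LIMSEQ_inverse_real_of_nat by simp
    qed
    have "\<forall>n\<ge>0. norm (z - p n) \<le> d + 1/(real n + 1)" using pn less_imp_le by blast
    then show ?thesis using LIMSEQ_le[OF t1 t2] by auto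
  qed
  then have nd: "norm (z - p0) = d" using dle[OF p0L] by simp
  have "\<forall>l\<in>L. inner (z - p0) l = 0"
  proof
    fix l assume lL: "l \<in> L"
    have "(- inner (z - p0) l)^2 \<le> 0 * inner l l"
    proof (rule quad_discr)
      fix t :: real
      have "p0 + t *\<^sub>R l \<in> L" using p0L lL sL by (simp add: subspace_add subspace_scale)
      then have "d \<le> norm (z - (p0 + t *\<^sub>R l))" by (rule dle)
      then have "norm (z - p0) \<le> norm (z - (p0 + t *\<^sub>R l))" by (simp only: nd)
      then have "(norm (z - p0))^2 \<le> (norm (z - (p0 + t *\<^sub>R l)))^2"
        by (rule power_mono) simp
      also have "\<dots> = (norm ((z - p0) - t *\<^sub>R l))^2" by (simp add: algebra_simps)
      also have "\<dots> = (norm (z - p0))^2 + 2 * (- inner (z - p0) l) * t + inner l l * t^2"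
        unfolding power2_norm_eq_inner
        by (simp add: inner_diff_left inner_diff_right inner_commute power2_eq_square algebra_simps)
      finally show "0 \<le> 0 + 2 * (- inner (z - p0) l) * t + inner l l * t^2" by simp
    qed simp
    then show "inner (z - p0) l = 0" by simp
  qed
  then show ?thesis using p0L by blast
qed

lemma subspace_closure':
  fixes L :: "'v::real_normed_vector set"
  assumes sL: "subspace L"
  shows "subspace (closure L)"
  unfolding subspace_def
proof (intro conjI ballI allI)
  show "0 \<in> closure L" using sL subspace_0 closure_subset by blast
next
  fix x y assume x: "x \<in> closure L" and y: "y \<in> closure L"
  obtain a where a: "\<And>n. a n \<in> L" "a \<longlonglongrightarrow> x" using x closure_sequential by blast
  obtain b where b: "\<And>n. b n \<in> L" "b \<longlonglongrightarrow> y" using y closure_sequential by blast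
  have "(\<lambda>n. a n + b n) \<longlonglongrightarrow> x + y" by (intro tendsto_intros a b)
  moreover have "\<And>n. a n + b n \<in> L" using a b sL by (simp add: subspace_add)
  ultimately show "x + y \<in> closure L" unfolding closure_sequential
    by (intro exI[where x="\<lambda>n. a n + b n"]) simp
next
  fix c :: real and x assume x: "x \<in> closure L"
  obtain a where a: "\<And>n. a n \<in> L" "a \<longlonglongrightarrow> x" using x closure_sequential by blast
  have "(\<lambda>n. c *\<^sub>R a n) \<longlonglongrightarrow> c *\<^sub>R x" by (intro tendsto_intros a)
  moreover have "\<And>n. c *\<^sub>R a n \<in> L" using a sL by (simp add: subspace_scale)
  ultimately show "c *\<^sub>R x \<in> closure L" unfolding closure_sequential
    by (intro exI[where x="\<lambda>n. c *\<^sub>R a n"]) simp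
qed

lemma dense_from_orth:
  fixes L :: "'v::{real_inner,complete_space} set"
  assumes sL: "subspace L" and orth: "\<And>z. (\<forall>l\<in>L. inner z l = 0) \<Longrightarrow> z = 0"
  shows "closure L = UNIV"
proof -
  have sC: "subspace (closure L)" using sL by (rule subspace_closure')
  have "z \<in> closure L" for z
  proof -
    obtain p where pL: "p \<in> closure L" and o: "\<forall>l\<in>closure L. inner (z - p) l = 0"
      using projection_exists[OF sC closed_closure] by blast
    then have "\<forall>l\<in>L. inner (z - p) l = 0" using closure_subset by blast
    then have "z - p = 0" by (rule orth)
    then show ?thesis using pL by simp
  qed
  then show ?thesis by auto
qed


fun sqc :: "nat \<Rightarrow> real" where
  "sqc k = (if k = 0 then 0 else if k = 1 then 1/2
            else (1/2) * (\<Sum>i\<in>{1..<k}. sqc i * sqc (k - i)))"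

declare sqc.simps[simp del]

lemma sqc_0[simp]: "sqc 0 = 0" by (simp add: sqc.simps)
lemma sqc_1[simp]: "sqc 1 = 1/2" by (simp add: sqc.simps)
lemma sqc_Suc0[simp]: "sqc (Suc 0) = 1/2" by (simp add: sqc.simps)

lemma sqc_nonneg: "0 \<le> sqc k"
proof (induction k rule: less_induct)
  case (less k)
  show ?case
  proof (cases "k \<le> 1")
    case True then show ?thesis by (cases k) auto
  next
    case False
    then have "sqc k = (1/2) * (\<Sum>i\<in>{1..<k}. sqc i * sqc (k - i))" by (simp add: sqc.simps)
    also have "\<dots> \<ge> 0"
      using less by (intro mult_nonneg_nonneg sum_nonneg) auto
    finally show ?thesis by simp
  qed
qed

lemma sqc_conv: "(\<Sum>i\<le>k. sqc i * sqc (k - i)) = 2 * sqc k - (if k = 1 then 1 else 0)"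
proof (cases "k \<le> 1")
  case True then show ?thesis by (cases k) auto
next
  case False
  then have k2: "k \<ge> 2" by simp
  have "{..k} = insert 0 (insert k {1..<k})" using k2 by auto
  then have "(\<Sum>i\<le>k. sqc i * sqc (k - i)) = (\<Sum>i\<in>{1..<k}. sqc i * sqc (k - i))"
    using k2 by simp
  also have "\<dots> = 2 * sqc k" using k2 by (simp add: sqc.simps[of k])
  finally show ?thesis using k2 by simp
qed

definition sqs :: "nat \<Rightarrow> real" where "sqs n = (\<Sum>k\<le>n. sqc k)"

lemma sqs_nonneg: "0 \<le> sqs n" unfolding sqs_def by (intro sum_nonneg sqc_nonneg)

lemma sqs_mono: "m \<le> n \<Longrightarrow> sqs m \<le> sqs n"
  unfolding sqs_def by (intro sum_mono2) (auto intro: sqc_nonneg)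

lemma tri_sum: "(\<Sum>(i,j)\<in>{(i,j). i+j \<le> n}. sqc i * sqc j) = 2 * sqs n - (if n \<ge> 1 then 1 else 0)"
proof -
  have "(\<Sum>(i,j)\<in>{(i,j). i+j \<le> n}. sqc i * sqc j) = (\<Sum>k\<le>n. \<Sum>i\<le>k. sqc i * sqc (k - i))"
    by (rule sum.triangle_reindex_eq)
  also have "\<dots> = (\<Sum>k\<le>n. 2 * sqc k - (if k = 1 then 1 else 0))" by (simp add: sqc_conv)
  also have "\<dots> = 2 * sqs n - (\<Sum>k\<le>n. (if k = 1 then 1 else 0))"
    by (simp add: sum_subtractf sum_distrib_left sqs_def)
  also have "(\<Sum>k\<le>n. (if k = 1 then 1 else 0)) = (if n \<ge> 1 then 1 else (0::real))"
    by (simp add: sum.delta)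
  finally show ?thesis .
qed

lemma sq_sum_prod: "(\<Sum>(i,j)\<in>{..n}\<times>{..n}. sqc i * sqc j) = (sqs n)^2"
  by (simp add: sqs_def power2_eq_square sum_product sum.cartesian_product)

lemma sqs_le1: "sqs n \<le> 1"
proof (induction n)
  case 0 then show ?case by (simp add: sqs_def)
next
  case (Suc n)
  let ?f = "\<lambda>(i,j). sqc i * sqc j"
  let ?P = "{(i,j). i+j \<le> Suc n}"
  have finP: "finite ?P"
    by (rule finite_subset[of _ "{..Suc n}\<times>{..Suc n}"]) auto
  have "sum ?f ?P = sum ?f (?P \<inter> {(i,j). 1 \<le> i \<and> 1 \<le> j})"
    by (rule sum.mono_neutral_right) (use finP in \<open>auto simp: Suc_le_eq intro!: Nat.gr0I\<close>)
  also have "\<dots> \<le> sum ?f ({..n}\<times>{..n})"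
    by (rule sum_mono2) (auto intro: mult_nonneg_nonneg sqc_nonneg)
  also have "\<dots> = (sqs n)^2" by (rule sq_sum_prod)
  also have "\<dots> \<le> 1" using Suc.IH sqs_nonneg[of n] by (simp add: power_le_one)
  finally have "2 * sqs (Suc n) - 1 \<le> 1" using tri_sum[of "Suc n"] by simp
  then show ?case by simp
qed

lemma sqc_summable: "summable sqc"
proof (rule summableI_nonneg_bounded[where x=1])
  show "0 \<le> sqc n" for n by (rule sqc_nonneg)
  show "sum sqc {..<n} \<le> 1" for n
  proof (cases n)
    case 0 then show ?thesis by simp
  next
    case (Suc m)
    then have "{..<n} = {..m}" by auto
    then show ?thesis using sqs_le1[of m] by (simp add: sqs_def)
  qed
qed

lemma sqs_lim: "sqs \<longlonglongrightarrow> suminf sqc"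
  unfolding sqs_def by (rule summable_LIMSEQ'[OF sqc_summable])

lemma sqc_sum_le1: "suminf sqc \<le> 1"
  by (rule LIMSEQ_le_const2[OF sqs_lim]) (auto intro: sqs_le1)

lemma sqc_sum_eq1: "suminf sqc = 1"
proof -
  have ab: "summable (\<lambda>k. norm (sqc k))" using sqc_summable sqc_nonneg by simp
  have "suminf sqc * suminf sqc = (\<Sum>k. \<Sum>i\<le>k. sqc i * sqc (k - i))"
    by (rule Cauchy_product[OF ab ab])
  also have "\<dots> = (\<Sum>k. 2 * sqc k - (if k = 1 then 1 else 0))" by (simp add: sqc_conv)
  also have "\<dots> = 2 * suminf sqc - 1"
  proof -
    have s1: "summable (\<lambda>k. 2 * sqc k)" using sqc_summable by (rule summable_mult)
    have s2: "(\<lambda>k. if k = 1 then 1 else (0::real)) sums 1"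
      using sums_single[of 1 "\<lambda>_. 1::real"] by simp
    have "(\<lambda>k. 2 * sqc k - (if k = 1 then 1 else 0)) sums (2 * suminf sqc - 1)"
      by (intro sums_diff s2 sums_mult summable_sums sqc_summable)
    then show ?thesis by (rule sums_unique[symmetric])
  qed
  finally have "(suminf sqc - 1)^2 = 0" by (simp add: power2_eq_square algebra_simps)
  then show ?thesis by simp
qed

lemma sqs_lim1: "sqs \<longlonglongrightarrow> 1"
  using sqs_lim sqc_sum_eq1 by simp


lemma summable_comparison_cs:
  fixes f :: "nat \<Rightarrow> 'a::{real_normed_vector,complete_space}"
  assumes fg: "\<And>n. norm (f n) \<le> g n" and g: "summable g"
  shows "summable f"
proof -
  define S where "S n = sum f {..<n}" for n
  define G where "G n = sum g {..<n}" for n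
  have "convergent G" using g unfolding G_def by (simp add: summable_iff_convergent)
  then have CG: "Cauchy G" by (rule convergent_Cauchy)
  have le: "norm (S n - S m) \<le> G n - G m" if "m \<le> n" for m n
  proof -
    have ef: "sum f {0..<m} + sum f {m..<n} = sum f {0..<n}"
      by (rule sum.atLeastLessThan_concat) (use that in auto)
    have eg: "sum g {0..<m} + sum g {m..<n} = sum g {0..<n}"
      by (rule sum.atLeastLessThan_concat) (use that in auto)
    have "S n - S m = sum f {m..<n}"
      unfolding S_def using ef by (metis add_diff_cancel_left' atLeast0LessThan)
    also have "norm \<dots> \<le> sum g {m..<n}" by (rule sum_norm_le) (rule fg)
    also have "\<dots> = G n - G m"
      unfolding G_def using eg by (metis add_diff_cancel_left' atLeast0LessThan)
    finally show ?thesis .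
  qed
  have "Cauchy S"
  proof (rule CauchyI)
    fix e :: real assume e: "0 < e"
    obtain M where M: "\<And>m n. m \<ge> M \<Longrightarrow> n \<ge> M \<Longrightarrow> norm (G m - G n) < e"
      using CauchyD[OF CG e] by blast
    show "\<exists>M. \<forall>m\<ge>M. \<forall>n\<ge>M. norm (S m - S n) < e"
    proof (intro exI allI impI)
      fix m n assume m: "M \<le> m" and n: "M \<le> n"
      show "norm (S m - S n) < e"
      proof (cases "n \<le> m")
        case True
        then have "norm (S m - S n) \<le> G m - G n" by (rule le)
        also have "\<dots> \<le> norm (G m - G n)" by simp
        finally show ?thesis using M[OF m n] by simp
      next
        case False
        then have "norm (S n - S m) \<le> G n - G m" by (intro le) simp
        also have "\<dots> \<le> norm (G n - G m)" by simp
        finally show ?thesis using M[OF n m] by (simp add: norm_minus_commute)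
      qed
    qed
  qed
  then have "convergent S" by (rule Cauchy_convergent)
  then show ?thesis unfolding S_def by (simp add: summable_iff_convergent)
qed

locale sym_contr =
  fixes B :: "'v::{real_inner,complete_space} \<Rightarrow> 'v"
  assumes bl: "bounded_linear B" and sy: "symmetric_op B" and nb: "\<And>x. norm (B x) \<le> norm x"
begin

lemma pow_bl: "bounded_linear (B ^^ k)"
proof (induction k)
  case 0 then show ?case by (simp add: id_def bounded_linear_ident)
next
  case (Suc k) then show ?case by (simp add: bounded_linear_compose[OF bl])
qed

lemma pow_nb: "norm ((B ^^ k) x) \<le> norm x"
proof (induction k)
  case (Suc k) then show ?case using nb[of "(B^^k) x"] by simp
qed simp

lemma pow_sym: "inner ((B ^^ k) x) y = inner x ((B ^^ k) y)"
proof (induction k arbitrary: x y)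
  case (Suc k)
  have "inner ((B ^^ Suc k) x) y = inner (B ((B^^k) x)) y" by simp
  also have "\<dots> = inner ((B^^k) x) (B y)" using sy unfolding symmetric_op_def by blast
  also have "\<dots> = inner x ((B^^k) (B y))" by (rule Suc)
  also have "(B^^k) (B y) = (B ^^ Suc k) y" by (simp add: funpow_swap1)
  finally show ?case .
qed simp

lemma pow_add: "(B^^i) ((B^^j) x) = (B^^(i+j)) x"
  by (simp add: funpow_add)

lemma pow_comm:
  assumes "\<And>x. K (B x) = B (K x)"
  shows "K ((B^^k) x) = (B^^k) (K x)"
  by (induction k) (simp_all add: assms)

definition ser :: "'v \<Rightarrow> 'v" where "ser x = (\<Sum>k. sqc k *\<^sub>R (B^^k) x)"
definition sn :: "nat \<Rightarrow> 'v \<Rightarrow> 'v" where "sn n x = (\<Sum>k\<le>n. sqc k *\<^sub>R (B^^k) x)"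

lemma ser_summable: "summable (\<lambda>k. sqc k *\<^sub>R (B^^k) x)"
proof (rule summable_comparison_cs)
  show "norm (sqc n *\<^sub>R (B^^n) x) \<le> sqc n * norm x" for n
    using pow_nb sqc_nonneg by (auto intro!: mult_left_mono)
  show "summable (\<lambda>n. sqc n * norm x)" by (intro summable_mult2 sqc_summable)
qed

lemma sn_lim: "(\<lambda>n. sn n x) \<longlonglongrightarrow> ser x"
  unfolding sn_def ser_def by (rule summable_LIMSEQ'[OF ser_summable])

lemma sn_diff_norm:
  assumes "n \<le> m"
  shows "norm (sn m y - sn n y) \<le> (sqs m - sqs n) * norm y"
proof -
  have sub: "{..n} \<subseteq> {..m}" using assms by auto
  have "sn m y - sn n y = (\<Sum>k\<in>{..m} - {..n}. sqc k *\<^sub>R (B^^k) y)"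
    unfolding sn_def by (rule sum_diff[OF _ sub, symmetric]) simp
  also have "norm \<dots> \<le> (\<Sum>k\<in>{..m} - {..n}. sqc k * norm y)"
    by (rule sum_norm_le) (use pow_nb sqc_nonneg in \<open>auto intro!: mult_left_mono\<close>)
  also have "\<dots> = (\<Sum>k\<in>{..m} - {..n}. sqc k) * norm y" by (simp add: sum_distrib_right)
  also have "(\<Sum>k\<in>{..m} - {..n}. sqc k) = sqs m - sqs n"
    unfolding sqs_def by (rule sum_diff[OF _ sub]) simp
  finally show ?thesis .
qed

lemma sn_norm: "norm (sn n x) \<le> norm x"
proof -
  have "norm (sn n x) \<le> (\<Sum>k\<le>n. sqc k * norm x)"
    unfolding sn_def by (rule sum_norm_le) (use pow_nb sqc_nonneg in \<open>auto intro!: mult_left_mono\<close>)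
  also have "\<dots> = sqs n * norm x" by (simp add: sqs_def sum_distrib_right)
  also have "\<dots> \<le> 1 * norm x" by (intro mult_right_mono sqs_le1) simp
  finally show ?thesis by simp
qed

lemma ser_norm: "norm (ser x) \<le> norm x"
proof -
  have "(\<lambda>n. norm (sn n x)) \<longlonglongrightarrow> norm (ser x)" by (intro tendsto_intros sn_lim)
  then show ?thesis by (rule LIMSEQ_le_const2) (use sn_norm in blast)
qed

lemma ser_tail: "norm (ser y - sn n y) \<le> (1 - sqs n) * norm y"
proof -
  have t1: "(\<lambda>m. norm (sn m y - sn n y)) \<longlonglongrightarrow> norm (ser y - sn n y)"
    by (intro tendsto_intros sn_lim)
  have t2: "(\<lambda>m. (sqs m - sqs n) * norm y) \<longlonglongrightarrow> (1 - sqs n) * norm y"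
    by (intro tendsto_intros sqs_lim1)
  show ?thesis
    by (rule LIMSEQ_le[OF t1 t2]) (use sn_diff_norm in blast)
qed

lemma ser_add: "ser (x + y) = ser x + ser y"
proof -
  interpret L: bounded_linear "B^^k" for k by (rule pow_bl)
  show ?thesis
    unfolding ser_def
    by (subst suminf_add[OF ser_summable ser_summable]) (simp add: L.add scaleR_right_distrib)
qed

lemma ser_scale: "ser (r *\<^sub>R x) = r *\<^sub>R ser x"
proof -
  interpret L: bounded_linear "B^^k" for k by (rule pow_bl)
  have "r *\<^sub>R ser x = (\<Sum>k. r *\<^sub>R (sqc k *\<^sub>R (B^^k) x))"
    unfolding ser_def by (rule bounded_linear.suminf[OF bounded_linear_scaleR_right ser_summable])
  also have "\<dots> = (\<Sum>k. sqc k *\<^sub>R (B^^k) (r *\<^sub>R x))"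
    by (rule suminf_cong) (simp add: L.scaleR)
  finally show ?thesis unfolding ser_def ..
qed

lemma ser_bl: "bounded_linear ser"
  by (rule bounded_linear_intro[where K=1]) (auto simp: ser_add ser_scale ser_norm)

lemma ser_comm:
  assumes K: "bounded_linear K" and c: "\<And>x. K (B x) = B (K x)"
  shows "K (ser x) = ser (K x)"
proof -
  interpret K: bounded_linear K by (rule K)
  have "K (ser x) = (\<Sum>k. K (sqc k *\<^sub>R (B^^k) x))"
    unfolding ser_def by (rule K.suminf[OF ser_summable])
  also have "\<dots> = ser (K x)" unfolding ser_def by (simp add: K.scaleR pow_comm[of K, OF c])
  finally show ?thesis .
qed

lemma ser_sym: "inner (ser x) y = inner x (ser y)"
proof -
  have "inner (ser x) y = (\<Sum>k. inner (sqc k *\<^sub>R (B^^k) x) y)"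
    unfolding ser_def by (rule bounded_linear.suminf[OF bounded_linear_inner_left ser_summable])
  also have "\<dots> = (\<Sum>k. inner x (sqc k *\<^sub>R (B^^k) y))" by (simp add: pow_sym)
  also have "\<dots> = inner x (ser y)"
    unfolding ser_def by (rule bounded_linear.suminf[OF bounded_linear_inner_right ser_summable, symmetric])
  finally show ?thesis .
qed

lemma sn_sq: "sn n (sn n x) = (\<Sum>(i,j)\<in>{..n}\<times>{..n}. (sqc i * sqc j) *\<^sub>R (B^^(i+j)) x)"
proof -
  interpret L: bounded_linear "B^^k" for k by (rule pow_bl)
  have "sn n (sn n x) = (\<Sum>i\<le>n. sqc i *\<^sub>R (\<Sum>j\<le>n. sqc j *\<^sub>R (B^^i) ((B^^j) x)))"
    unfolding sn_def by (simp add: L.sum L.scaleR)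
  also have "\<dots> = (\<Sum>i\<le>n. \<Sum>j\<le>n. (sqc i * sqc j) *\<^sub>R (B^^(i+j)) x)"
    by (simp add: scaleR_sum_right pow_add)
  also have "\<dots> = (\<Sum>(i,j)\<in>{..n}\<times>{..n}. (sqc i * sqc j) *\<^sub>R (B^^(i+j)) x)"
    by (simp add: sum.cartesian_product)
  finally show ?thesis .
qed

lemma tri_vec: "(\<Sum>(i,j)\<in>{(i,j). i+j \<le> n}. (sqc i * sqc j) *\<^sub>R (B^^(i+j)) x)
   = 2 *\<^sub>R sn n x - (if n \<ge> 1 then B x else 0)"
proof -
  have "(\<Sum>(i,j)\<in>{(i,j). i+j \<le> n}. (sqc i * sqc j) *\<^sub>R (B^^(i+j)) x)
     = (\<Sum>k\<le>n. \<Sum>i\<le>k. (sqc i * sqc (k - i)) *\<^sub>R (B^^(i + (k - i))) x)"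
    by (rule sum.triangle_reindex_eq)
  also have "\<dots> = (\<Sum>k\<le>n. (\<Sum>i\<le>k. sqc i * sqc (k - i)) *\<^sub>R (B^^k) x)"
    by (simp add: scaleR_sum_left)
  also have "\<dots> = (\<Sum>k\<le>n. (2 * sqc k - (if k = 1 then 1 else 0)) *\<^sub>R (B^^k) x)"
    by (simp only: sqc_conv)
  also have "\<dots> = 2 *\<^sub>R sn n x - (\<Sum>k\<le>n. (if k = 1 then 1 else 0) *\<^sub>R (B^^k) x)"
    unfolding sn_def by (simp add: scaleR_diff_left sum_subtractf scaleR_sum_right)
  also have "(\<Sum>k\<le>n. (if k = 1 then 1 else 0) *\<^sub>R (B^^k) x) = (\<Sum>k\<le>n. (if k = 1 then B x else 0))"
    by (rule sum.cong) auto
  also have "\<dots> = (if n \<ge> 1 then B x else 0)" by (simp add: sum.delta)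
  finally show ?thesis .
qed

lemma sq_err: "norm (sn n (sn n x) - (2 *\<^sub>R sn n x - (if n \<ge> 1 then B x else 0)))
   \<le> ((sqs n)^2 - (2 * sqs n - (if n \<ge> 1 then 1 else 0))) * norm x"
proof -
  let ?f = "\<lambda>(i,j). (sqc i * sqc j) *\<^sub>R (B^^(i+j)) x"
  let ?g = "\<lambda>(i,j). sqc i * sqc j"
  let ?A = "{..n}\<times>{..n}"
  let ?P = "{(i,j). i+j \<le> n}"
  have sub: "?P \<subseteq> ?A" by auto
  have fA: "finite ?A" by simp
  have "sn n (sn n x) - (2 *\<^sub>R sn n x - (if n \<ge> 1 then B x else 0)) = sum ?f ?A - sum ?f ?P"
    by (simp only: sn_sq tri_vec)
  also have "\<dots> = sum ?f (?A - ?P)" by (rule sum_diff[OF fA sub, symmetric])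
  also have "norm \<dots> \<le> sum (\<lambda>p. ?g p * norm x) (?A - ?P)"
    by (rule sum_norm_le) (auto simp: abs_of_nonneg sqc_nonneg intro!: mult_left_mono mult_nonneg_nonneg pow_nb)
  also have "\<dots> = sum ?g (?A - ?P) * norm x" by (simp add: sum_distrib_right)
  also have "sum ?g (?A - ?P) = sum ?g ?A - sum ?g ?P" by (rule sum_diff[OF fA sub])
  also have "\<dots> = (sqs n)^2 - (2 * sqs n - (if n \<ge> 1 then 1 else 0))"
    by (simp only: sq_sum_prod tri_sum)
  finally show ?thesis .
qed

end


context sym_contr begin

lemma ser_sq: "ser (ser x) = 2 *\<^sub>R ser x - B x"
proof -
  define e where "e n = (sqs n)^2 - (2 * sqs n - (if n \<ge> 1 then 1 else (0::real)))" for n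
  have e0: "e \<longlonglongrightarrow> 0"
  proof -
    have "(\<lambda>n. (sqs n)^2 - (2 * sqs n - 1)) \<longlonglongrightarrow> 1^2 - (2 * 1 - 1)"
      by (intro tendsto_intros sqs_lim1)
    then have lim: "(\<lambda>n. (sqs n)^2 - (2 * sqs n - 1)) \<longlonglongrightarrow> 0" by simp
    have ev: "\<forall>\<^sub>F n in sequentially. (sqs n)^2 - (2 * sqs n - 1) = e n"
      unfolding e_def eventually_sequentially by (intro exI[of _ 1]) auto
    show ?thesis by (rule Lim_transform_eventually[OF lim ev])
  qed
  have tl: "(\<lambda>n. 1 - sqs n) \<longlonglongrightarrow> 0" using tendsto_diff[OF tendsto_const sqs_lim1, of 1] by simp
  have l1: "(\<lambda>n. sn n (sn n x)) \<longlonglongrightarrow> ser (ser x)"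
  proof (rule LIM_zero_cancel)
    have bnd: "norm (sn n (sn n x) - ser (ser x)) \<le> 2 * ((1 - sqs n) * norm x)" for n
    proof -
      interpret S: bounded_linear ser by (rule ser_bl)
      have eq: "sn n (sn n x) - ser (ser x) = (- (ser (sn n x) - sn n (sn n x))) - (ser (ser x) - ser (sn n x))"
        by simp
      have "norm (sn n (sn n x) - ser (ser x))
          \<le> norm (ser (sn n x) - sn n (sn n x)) + norm (ser (ser x) - ser (sn n x))"
        unfolding eq using norm_triangle_ineq4 norm_minus_cancel by metis
      also have "norm (ser (sn n x) - sn n (sn n x)) \<le> (1 - sqs n) * norm (sn n x)" by (rule ser_tail)
      also have "\<dots> \<le> (1 - sqs n) * norm x"
        using sqs_le1[of n] sn_norm by (intro mult_left_mono) auto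
      also have "norm (ser (ser x) - ser (sn n x)) \<le> norm (ser x - sn n x)"
        using ser_norm[of "ser x - sn n x"] by (simp add: S.diff)
      also have "\<dots> \<le> (1 - sqs n) * norm x" by (rule ser_tail)
      finally show ?thesis by (simp add: mult.commute)
    qed
    have lim: "(\<lambda>n. 2 * ((1 - sqs n) * norm x)) \<longlonglongrightarrow> 0"
      using tendsto_mult[OF tendsto_const tendsto_mult[OF tl tendsto_const], of 2 "norm x"] by simp
    show "(\<lambda>n. sn n (sn n x) - ser (ser x)) \<longlonglongrightarrow> 0"
      by (rule Lim_null_comparison[OF always_eventually lim]) (use bnd in blast)
  qed
  have l2: "(\<lambda>n. 2 *\<^sub>R sn n x - (if n \<ge> 1 then B x else 0)) \<longlonglongrightarrow> 2 *\<^sub>R ser x - B x"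
  proof -
    have lim: "(\<lambda>n. 2 *\<^sub>R sn n x - B x) \<longlonglongrightarrow> 2 *\<^sub>R ser x - B x" by (intro tendsto_intros sn_lim)
    have ev: "\<forall>\<^sub>F n in sequentially. 2 *\<^sub>R sn n x - B x = 2 *\<^sub>R sn n x - (if n \<ge> 1 then B x else 0)"
      unfolding eventually_sequentially by (intro exI[of _ 1]) auto
    show ?thesis by (rule Lim_transform_eventually[OF lim ev])
  qed
  have l3: "(\<lambda>n. sn n (sn n x) - (2 *\<^sub>R sn n x - (if n \<ge> 1 then B x else 0))) \<longlonglongrightarrow> 0"
  proof -
    have lim: "(\<lambda>n. e n * norm x) \<longlonglongrightarrow> 0"
      using tendsto_mult[OF e0 tendsto_const, of "norm x"] by simp
    show ?thesis
      by (rule Lim_null_comparison[OF always_eventually lim]) (use sq_err e_def in simp)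
  qed
  have "(\<lambda>n. sn n (sn n x) - (2 *\<^sub>R sn n x - (if n \<ge> 1 then B x else 0))) \<longlonglongrightarrow> ser (ser x) - (2 *\<^sub>R ser x - B x)"
    by (intro tendsto_diff l1 l2)
  from LIMSEQ_unique[OF this l3] show ?thesis by simp
qed

end


lemma sqrt_exists:
  fixes A :: "'v::{real_inner,complete_space} \<Rightarrow> 'v"
  assumes bl: "bounded_linear A" and sy: "symmetric_op A" and po: "pos_op A"
  shows "\<exists>R. bounded_linear R \<and> symmetric_op R \<and> pos_op R \<and> (\<forall>x. R (R x) = A x) \<and>
     (\<forall>K. bounded_linear K \<longrightarrow> (\<forall>x. K (A x) = A (K x)) \<longrightarrow> (\<forall>x. K (R x) = R (K x)))"
proof -
  interpret A: bounded_linear A by (rule bl)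
  define a where "a = onorm A + 1"
  have onA: "0 \<le> onorm A" by (rule onorm_pos_le[OF bl])
  have a0: "0 < a" unfolding a_def using onA by simp
  have Asym: "inner (A x) y = inner x (A y)" for x y using sy unfolding symmetric_op_def by blast
  have Apos: "0 \<le> inner (A x) x" for x using po unfolding pos_op_def by blast
  define B where "B x = x - (1/a) *\<^sub>R A x" for x
  have Bbl: "bounded_linear B" unfolding B_def
    by (intro bounded_linear_sub bounded_linear_ident bounded_linear_compose[OF bounded_linear_scaleR_right bl])
  have Bsym: "symmetric_op B" unfolding symmetric_op_def B_def
    by (simp add: inner_diff_left inner_diff_right Asym)
  have Bpos: "pos_op B" unfolding pos_op_def
  proof
    fix x
    have "inner (A x) x \<le> norm (A x) * norm x" by (rule norm_cauchy_schwarz)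
    also have "\<dots> \<le> (onorm A * norm x) * norm x" by (intro mult_right_mono onorm[OF bl]) simp
    also have "\<dots> \<le> a * (norm x * norm x)" unfolding a_def by (simp add: algebra_simps)
    finally have "(1/a) * inner (A x) x \<le> norm x * norm x" using a0 by (simp add: field_simps)
    then show "0 \<le> inner (B x) x" unfolding B_def by (simp add: inner_diff_left power2_norm_eq_inner[symmetric] power2_eq_square)
  qed
  have Ble: "inner (B x) x \<le> inner x x" for x
    unfolding B_def using Apos[of x] a0 by (simp add: inner_diff_left)
  have Bnb: "norm (B x) \<le> norm x" for x by (rule pos_le_id_norm[OF Bbl Bsym Bpos Ble])
  interpret sc: sym_contr B by (rule sym_contr.intro[OF Bbl Bsym Bnb])
  define R0 where "R0 x = x - sc.ser x" for x
  have R0bl: "bounded_linear R0" unfolding R0_def by (intro bounded_linear_sub bounded_linear_ident sc.ser_bl)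
  interpret S: bounded_linear sc.ser by (rule sc.ser_bl)
  have R0sym: "symmetric_op R0" unfolding symmetric_op_def R0_def
    by (simp add: inner_diff_left inner_diff_right sc.ser_sym)
  have R0pos: "pos_op R0" unfolding pos_op_def
  proof
    fix x
    have "inner (sc.ser x) x \<le> norm (sc.ser x) * norm x" by (rule norm_cauchy_schwarz)
    also have "\<dots> \<le> norm x * norm x" by (intro mult_right_mono sc.ser_norm) simp
    finally show "0 \<le> inner (R0 x) x" unfolding R0_def
      by (simp add: inner_diff_left power2_norm_eq_inner[symmetric] power2_eq_square)
  qed
  have R0sq: "R0 (R0 x) = (1/a) *\<^sub>R A x" for x
  proof -
    have "R0 (R0 x) = x - 2 *\<^sub>R sc.ser x + sc.ser (sc.ser x)"
      unfolding R0_def by (simp add: S.diff scaleR_2 algebra_simps)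
    also have "\<dots> = x - B x" by (simp add: sc.ser_sq)
    finally show ?thesis unfolding B_def by simp
  qed
  define R where "R x = sqrt a *\<^sub>R R0 x" for x
  interpret R0: bounded_linear R0 by (rule R0bl)
  have "bounded_linear R" unfolding R_def by (intro bounded_linear_compose[OF bounded_linear_scaleR_right R0bl])
  moreover have "symmetric_op R" using R0sym unfolding symmetric_op_def R_def by simp
  moreover have "pos_op R" using R0pos a0 unfolding pos_op_def R_def by simp
  moreover have "\<forall>x. R (R x) = A x"
  proof
    fix x
    have "R (R x) = (sqrt a * sqrt a) *\<^sub>R R0 (R0 x)" unfolding R_def by (simp add: R0.scaleR)
    also have "\<dots> = A x" using a0 by (simp add: R0sq)
    finally show "R (R x) = A x" .
  qed
  moreover have "\<forall>K. bounded_linear K \<longrightarrow> (\<forall>x. K (A x) = A (K x)) \<longrightarrow> (\<forall>x. K (R x) = R (K x))"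
  proof (intro allI impI)
    fix K x assume Kbl: "bounded_linear K" and KA: "\<forall>x. K (A x) = A (K x)"
    interpret K: bounded_linear K by (rule Kbl)
    have KB: "K (B y) = B (K y)" for y unfolding B_def by (simp add: K.diff K.scaleR KA)
    have "K (sc.ser x) = sc.ser (K x)" by (rule sc.ser_comm[OF Kbl KB])
    then show "K (R x) = R (K x)" unfolding R_def R0_def by (simp add: K.diff K.scaleR)
  qed
  ultimately show ?thesis by blast
qed

lemma sqrt_unique:
  fixes A :: "'v::{real_inner,complete_space} \<Rightarrow> 'v"
  assumes Rbl: "bounded_linear R" and Rsy: "symmetric_op R" and Rpo: "pos_op R" and RR: "\<And>x. R (R x) = A x"
    and Rc: "\<And>K. bounded_linear K \<Longrightarrow> (\<forall>x. K (A x) = A (K x)) \<Longrightarrow> (\<forall>x. K (R x) = R (K x))"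
    and R1bl: "bounded_linear R1" and R1sy: "symmetric_op R1" and R1po: "pos_op R1" and R1R1: "\<And>x. R1 (R1 x) = A x"
  shows "R1 = R"
proof -
  interpret R: bounded_linear R by (rule Rbl)
  interpret R1: bounded_linear R1 by (rule R1bl)
  have "\<forall>x. R1 (A x) = A (R1 x)" by (simp add: R1R1[symmetric])
  then have comm: "R1 (R x) = R (R1 x)" for x using Rc[OF R1bl] by blast
  define D where "D x = R1 x - R x" for x
  have Dsym: "inner (D x) y = inner x (D y)" for x y
    using Rsy R1sy unfolding symmetric_op_def D_def by (simp add: inner_diff_left inner_diff_right)
  have DD: "D (D x) = 0" for x
  proof -
    let ?y = "D x"
    have "inner (R1 ?y) ?y + inner (R ?y) ?y = inner (R1 ?y + R ?y) ?y" by (simp add: inner_add_left)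
    also have "R1 ?y + R ?y = R1 (R1 x) - R1 (R x) + R (R1 x) - R (R x)"
      unfolding D_def by (simp add: R1.diff R.diff)
    also have "\<dots> = 0" by (simp add: comm RR R1R1)
    finally have s: "inner (R1 ?y) ?y + inner (R ?y) ?y = 0" by simp
    have p1: "0 \<le> inner (R1 ?y) ?y" using R1po unfolding pos_op_def by blast
    have p2: "0 \<le> inner (R ?y) ?y" using Rpo unfolding pos_op_def by blast
    have "R1 ?y = 0" by (rule pos_zero[OF R1bl R1sy R1po]) (use s p1 p2 in linarith)
    moreover have "R ?y = 0" by (rule pos_zero[OF Rbl Rsy Rpo]) (use s p1 p2 in linarith)
    ultimately show ?thesis unfolding D_def[of "D x"] by simp
  qed
  have "D x = 0" for x
  proof -
    have "inner (D x) (D x) = inner (D (D x)) x" by (simp add: Dsym)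
    then show ?thesis by (simp add: DD)
  qed
  then show ?thesis unfolding D_def by (simp add: fun_eq_iff)
qed

lemma op_sqrt_props:
  fixes A :: "'v::{real_inner,complete_space} \<Rightarrow> 'v"
  assumes bl: "bounded_linear A" and sy: "symmetric_op A" and po: "pos_op A"
  shows "bounded_linear (op_sqrt A)" "symmetric_op (op_sqrt A)" "pos_op (op_sqrt A)"
    "\<And>x. op_sqrt A (op_sqrt A x) = A x"
    "\<And>K x. bounded_linear K \<Longrightarrow> (\<forall>x. K (A x) = A (K x)) \<Longrightarrow> K (op_sqrt A x) = op_sqrt A (K x)"
proof -
  obtain R where Rbl: "bounded_linear R" and Rsy: "symmetric_op R" and Rpo: "pos_op R"
    and RR: "\<forall>x. R (R x) = A x"
    and Rc: "\<forall>K. bounded_linear K \<longrightarrow> (\<forall>x. K (A x) = A (K x)) \<longrightarrow> (\<forall>x. K (R x) = R (K x))"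
    using sqrt_exists[OF bl sy po] by blast
  have "op_sqrt A = R"
    unfolding op_sqrt_def
  proof (rule the_equality)
    show "bounded_linear R \<and> symmetric_op R \<and> (\<forall>x. 0 \<le> inner (R x) x) \<and> (\<forall>x. R (R x) = A x)"
      using Rbl Rsy Rpo RR unfolding pos_op_def by blast
  next
    fix R1 assume "bounded_linear R1 \<and> symmetric_op R1 \<and> (\<forall>x. 0 \<le> inner (R1 x) x) \<and> (\<forall>x. R1 (R1 x) = A x)"
    then show "R1 = R"
      by (intro sqrt_unique[OF Rbl Rsy Rpo _ _, of A R1]) (use RR Rc in \<open>auto simp: pos_op_def\<close>)
  qed
  then show "bounded_linear (op_sqrt A)" "symmetric_op (op_sqrt A)" "pos_op (op_sqrt A)"
    "\<And>x. op_sqrt A (op_sqrt A x) = A x"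
    "\<And>K x. bounded_linear K \<Longrightarrow> (\<forall>x. K (A x) = A (K x)) \<Longrightarrow> K (op_sqrt A x) = op_sqrt A (K x)"
    using Rbl Rsy Rpo RR Rc by auto
qed

lemma op_sqrt_eq:
  fixes R :: "'v::{real_inner,complete_space} \<Rightarrow> 'v"
  assumes Rbl: "bounded_linear R" and Rsy: "symmetric_op R" and Rpo: "pos_op R"
    and A: "\<And>x. A x = R (R x)"
  shows "op_sqrt A = R"
proof -
  interpret R: bounded_linear R by (rule Rbl)
  have Abl: "bounded_linear A" unfolding A[abs_def] by (rule bounded_linear_compose[OF Rbl Rbl])
  have Asy: "symmetric_op A" using Rsy unfolding symmetric_op_def A by simp
  have Apo: "pos_op A" unfolding pos_op_def A
  proof
    fix x
    have "inner (R (R x)) x = inner (R x) (R x)" using Rsy unfolding symmetric_op_def by simp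
    then show "0 \<le> inner (R (R x)) x" by simp
  qed
  note P = op_sqrt_props[OF Abl Asy Apo]
  have "R = op_sqrt A"
  proof (rule sqrt_unique[of "op_sqrt A" A R])
    show "\<And>K. bounded_linear K \<Longrightarrow> \<forall>x. K (A x) = A (K x) \<Longrightarrow> \<forall>x. K (op_sqrt A x) = op_sqrt A (K x)"
      using P(5) by blast
  qed (simp_all only: P(1-4) Rbl Rsy Rpo A)
  then show ?thesis by simp
qed


lemma pinv_eq:
  assumes inj: "\<And>y. R y = 0 \<Longrightarrow> y = 0" and lin: "\<And>a b. R a - R b = R (a - b)" and w: "R x = w"
  shows "pinv R w = x"
  unfolding pinv_def
proof (rule the_equality)
  have "\<forall>y. R y = 0 \<longrightarrow> inner x y = 0"
  proof (intro allI impI)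
    fix y assume "R y = 0"
    then have "y = 0" by (rule inj)
    then show "inner x y = 0" by simp
  qed
  then show "R x = w \<and> (\<forall>y. R y = 0 \<longrightarrow> inner x y = 0)" using w by blast
next
  fix x' assume "R x' = w \<and> (\<forall>y. R y = 0 \<longrightarrow> inner x' y = 0)"
  then have "R (x' - x) = 0" using w lin[of x' x] by simp
  then show "x' = x" using inj by fastforce
qed

lemma rate_eq:
  assumes inj: "\<And>y. R y = 0 \<Longrightarrow> y = 0" and lin: "\<And>a b. R a - R b = R (a - b)" and w: "R x = w"
  shows "rate R w = ereal ((1/2) * (norm x)^2)"
proof -
  have "w \<in> range R" using w by (intro range_eqI[of _ _ x]) simp
  then show ?thesis unfolding rate_def using pinv_eq[OF inj lin w] by simp
qed

lemma dense_range_adj: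
  fixes Bo Bs :: "'v::{real_inner,complete_space} \<Rightarrow> 'v"
  assumes Bsbl: "bounded_linear Bs" and adj: "\<And>u z. inner (Bo u) z = inner u (Bs z)"
    and inj: "\<And>z. Bo z = 0 \<Longrightarrow> z = 0"
  shows "closure (range Bs) = UNIV"
proof (rule dense_from_orth)
  interpret Bs: bounded_linear Bs by (rule Bsbl)
  show "subspace (range Bs)" unfolding subspace_def
  proof (intro conjI ballI allI)
    show "0 \<in> range Bs" by (rule range_eqI[of _ _ 0]) simp
  next
    fix x y assume "x \<in> range Bs" "y \<in> range Bs"
    then obtain a b where "x = Bs a" "y = Bs b" by blast
    then show "x + y \<in> range Bs" by (intro range_eqI[of _ _ "a+b"]) (simp add: Bs.add)
  next
    fix c :: real and x assume "x \<in> range Bs"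
    then obtain a where "x = Bs a" by blast
    then show "c *\<^sub>R x \<in> range Bs" by (intro range_eqI[of _ _ "c *\<^sub>R a"]) (simp add: Bs.scaleR)
  qed
  fix z assume o: "\<forall>l\<in>range Bs. inner z l = 0"
  have "inner (Bo z) u = 0" for u using o adj[of z u] by (simp add: inner_commute)
  then have "inner (Bo z) (Bo z) = 0" by blast
  then show "z = 0" using inj by simp
qed

lemma sqrt_range_transfer:
  fixes R Bo Bs :: "'v::{real_inner,complete_space} \<Rightarrow> 'v"
  assumes Rbl: "bounded_linear R" and Rsy: "symmetric_op R"
    and Bobl: "bounded_linear Bo" and Bsbl: "bounded_linear Bs"
    and adj: "\<And>u z. inner (Bo u) z = inner u (Bs z)"
    and RR: "\<And>x. R (R x) = Bo (Bs x)"
    and dense: "closure (range Bs) = UNIV"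
  shows "\<exists>x. R x = Bo y \<and> norm x = norm y"
proof -
  interpret R: bounded_linear R by (rule Rbl)
  interpret Bo: bounded_linear Bo by (rule Bobl)
  interpret Bs: bounded_linear Bs by (rule Bsbl)
  have nR: "norm (R a) = norm (Bs a)" for a
  proof -
    have "inner (R a) (R a) = inner (R (R a)) a" using Rsy unfolding symmetric_op_def by simp
    also have "\<dots> = inner (Bs a) (Bs a)" by (simp add: RR adj)
    finally show ?thesis by (simp add: norm_eq_sqrt_inner)
  qed
  have "y \<in> closure (range Bs)" using dense by simp
  then obtain s where s: "\<And>n. s n \<in> range Bs" and sl: "s \<longlonglongrightarrow> y"
    unfolding closure_sequential by blast
  have "\<forall>n. \<exists>v. Bs v = s n" using s by (simp add: image_iff eq_commute)
  then obtain u where u: "\<And>n. Bs (u n) = s n" by (metis choice)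
  have uy: "(\<lambda>n. Bs (u n)) \<longlonglongrightarrow> y" using sl u by simp
  have "Cauchy (\<lambda>n. Bs (u n))" using uy by (rule LIMSEQ_imp_Cauchy)
  then have "Cauchy (\<lambda>n. R (u n))"
  proof -
    assume C: "Cauchy (\<lambda>n. Bs (u n))"
    have eq: "norm (R (u m) - R (u n)) = norm (Bs (u m) - Bs (u n))" for m n
      using nR[of "u m - u n"] by (simp only: R.diff Bs.diff)
    show ?thesis
    proof (rule CauchyI)
      fix e :: real assume "0 < e"
      from CauchyD[OF C this] obtain M where "\<forall>m\<ge>M. \<forall>n\<ge>M. norm (Bs (u m) - Bs (u n)) < e" by blast
      then show "\<exists>M. \<forall>m\<ge>M. \<forall>n\<ge>M. norm (R (u m) - R (u n)) < e" by (simp only: eq) blast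
    qed
  qed
  then obtain x where x: "(\<lambda>n. R (u n)) \<longlonglongrightarrow> x" using Cauchy_convergent_iff convergent_def by blast
  have "(\<lambda>n. R (R (u n))) \<longlonglongrightarrow> R x" using x by (rule R.tendsto)
  moreover have "(\<lambda>n. R (R (u n))) \<longlonglongrightarrow> Bo y" unfolding RR using uy by (rule Bo.tendsto)
  ultimately have "R x = Bo y" by (rule LIMSEQ_unique)
  moreover have "norm x = norm y"
  proof -
    have "(\<lambda>n. norm (R (u n))) \<longlonglongrightarrow> norm x" using x by (rule tendsto_norm)
    moreover have "(\<lambda>n. norm (R (u n))) \<longlonglongrightarrow> norm y" unfolding nR using uy by (rule tendsto_norm)
    ultimately show ?thesis by (rule LIMSEQ_unique)
  qed
  ultimately show ?thesis by blast
qed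


lemma dense_orth_zero:
  fixes D :: "'v::real_inner set"
  assumes d: "closure D = UNIV" and o: "\<And>y. y \<in> D \<Longrightarrow> inner y z = 0"
  shows "z = 0"
proof -
  have "z \<in> closure D" using d by simp
  then obtain s where s: "\<And>n. s n \<in> D" and sl: "s \<longlonglongrightarrow> z" unfolding closure_sequential by blast
  have "(\<lambda>n. inner (s n) z) \<longlonglongrightarrow> inner z z" by (intro tendsto_intros sl)
  moreover have "(\<lambda>n. inner (s n) z) = (\<lambda>n. 0)" using o s by simp
  ultimately have "inner z z = 0" using LIMSEQ_const_iff by metis
  then show ?thesis by simp
qed

locale maxw =
  fixes M :: "'v::{real_inner,complete_space} \<Rightarrow> 'v" and DM :: "'v set"
  assumes skew: "skew_adjoint M DM"
begin

lemma sub: "subspace DM" using skew unfolding skew_adjoint_def by blast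
lemma dense: "closure DM = UNIV" using skew unfolding skew_adjoint_def by blast
lemma M_add: "x \<in> DM \<Longrightarrow> y \<in> DM \<Longrightarrow> M (x + y) = M x + M y" using skew unfolding skew_adjoint_def by blast
lemma M_scale: "x \<in> DM \<Longrightarrow> M (c *\<^sub>R x) = c *\<^sub>R M x" using skew unfolding skew_adjoint_def by blast
lemma adj_char: "y \<in> DM \<longleftrightarrow> (\<exists>z. \<forall>x\<in>DM. inner (M x) y = inner x z)" using skew unfolding skew_adjoint_def by blast
lemma M_skew: "x \<in> DM \<Longrightarrow> y \<in> DM \<Longrightarrow> inner (M x) y = - inner x (M y)" using skew unfolding skew_adjoint_def by blast

lemma DM_0: "0 \<in> DM" using sub by (rule subspace_0)
lemma DM_add: "x \<in> DM \<Longrightarrow> y \<in> DM \<Longrightarrow> x + y \<in> DM" using sub by (rule subspace_add)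
lemma DM_scale: "x \<in> DM \<Longrightarrow> c *\<^sub>R x \<in> DM" using sub by (rule subspace_scale)
lemma DM_diff: "x \<in> DM \<Longrightarrow> y \<in> DM \<Longrightarrow> x - y \<in> DM" using sub by (rule subspace_diff)
lemma DM_neg: "x \<in> DM \<Longrightarrow> - x \<in> DM" using sub by (rule subspace_neg)

lemma M_0: "M 0 = 0" using M_scale[OF DM_0, of 0] by simp
lemma M_neg: "x \<in> DM \<Longrightarrow> M (- x) = - M x" using M_scale[of x "-1"] by simp
lemma M_diff: "x \<in> DM \<Longrightarrow> y \<in> DM \<Longrightarrow> M (x - y) = M x - M y"
  using M_add[of x "- y"] M_neg[of y] DM_neg[of y] by simp

lemma Mx_x: "x \<in> DM \<Longrightarrow> inner (M x) x = 0"
  using M_skew[of x x] by (simp add: inner_commute)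

lemma norm_res_sq: "x \<in> DM \<Longrightarrow> (norm (x - c *\<^sub>R M x))^2 = (norm x)^2 + c^2 * (norm (M x))^2"
  unfolding power2_norm_eq_inner
  by (simp add: inner_diff_left inner_diff_right Mx_x inner_commute[of x "M x"] power2_eq_square algebra_simps)

lemma norm_resp_sq: "x \<in> DM \<Longrightarrow> (norm (x + c *\<^sub>R M x))^2 = (norm x)^2 + c^2 * (norm (M x))^2"
  using norm_res_sq[of x "-c"] by simp

lemma M_closed:
  assumes xn: "\<And>n. x n \<in> DM" and xa: "x \<longlonglongrightarrow> a" and mb: "(\<lambda>n. M (x n)) \<longlonglongrightarrow> b"
  shows "a \<in> DM \<and> M a = b"
proof -
  have e1: "inner (M y) a = inner y (- b)" if y: "y \<in> DM" for y
  proof -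
    have "(\<lambda>n. inner (M y) (x n)) \<longlonglongrightarrow> inner (M y) a" by (intro tendsto_intros xa)
    moreover have "(\<lambda>n. inner (M y) (x n)) = (\<lambda>n. - inner y (M (x n)))" using M_skew[OF y xn] by simp
    moreover have "(\<lambda>n. - inner y (M (x n))) \<longlonglongrightarrow> - inner y b" by (intro tendsto_intros mb)
    ultimately show ?thesis using LIMSEQ_unique by fastforce
  qed
  then have aD: "a \<in> DM" using adj_char by blast
  have "inner y (M a - b) = 0" if y: "y \<in> DM" for y
    using e1[OF y] M_skew[OF y aD] by (simp add: inner_diff_right)
  then have "M a - b = 0" by (intro dense_orth_zero[OF dense]) blast
  then show ?thesis using aD by simp
qed

lemma res_exists:
  assumes c: "c \<noteq> 0"
  shows "\<exists>y\<in>DM. y - c *\<^sub>R M y = x"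
proof -
  define f where "f y = y - c *\<^sub>R M y" for y
  define L where "L = f ` DM"
  have f_diff: "f y1 - f y2 = f (y1 - y2)" if "y1 \<in> DM" "y2 \<in> DM" for y1 y2
    unfolding f_def using that by (simp add: M_diff algebra_simps)
  have f_norm: "norm y \<le> norm (f y)" if "y \<in> DM" for y
  proof -
    have "(norm y)^2 \<le> (norm (f y))^2" unfolding f_def using norm_res_sq[OF that, of c] by simp
    then show ?thesis by (simp add: power2_le_iff_abs_le)
  qed
  have subL: "subspace L" unfolding subspace_def L_def
  proof (intro conjI ballI allI)
    show "0 \<in> f ` DM" using DM_0 M_0 unfolding f_def by (intro image_eqI[of _ _ 0]) auto
  next
    fix u v assume "u \<in> f ` DM" "v \<in> f ` DM"
    then obtain a b where ab: "a \<in> DM" "b \<in> DM" "u = f a" "v = f b" by blast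
    have "f (a + b) = f a + f b" unfolding f_def using ab(1,2) by (simp add: M_add scaleR_right_distrib)
    then show "u + v \<in> f ` DM" using ab DM_add[OF ab(1,2)] by (intro image_eqI[of _ _ "a + b"]) simp_all
  next
    fix r :: real and u assume "u \<in> f ` DM"
    then obtain a where a: "a \<in> DM" "u = f a" by blast
    have "f (r *\<^sub>R a) = r *\<^sub>R f a" unfolding f_def using a(1) by (simp add: M_scale scaleR_right_diff_distrib)
    then show "r *\<^sub>R u \<in> f ` DM" using a DM_scale[OF a(1)] by (intro image_eqI[of _ _ "r *\<^sub>R a"]) simp_all
  qed
  have clL: "closed L" unfolding closed_sequential_limits
  proof (intro allI impI, elim conjE)
    fix w l assume wL: "\<forall>n. w n \<in> L" and wl: "w \<longlonglongrightarrow> l"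
    have "\<forall>n. \<exists>v. v \<in> DM \<and> w n = f v" using wL unfolding L_def by blast
    then obtain y where y0: "\<forall>n. y n \<in> DM \<and> w n = f (y n)" by (metis choice)
    then have y: "\<And>n. y n \<in> DM" "\<And>n. w n = f (y n)" by simp_all
    have "Cauchy y"
    proof (rule CauchyI)
      fix e :: real assume "0 < e"
      from CauchyD[OF LIMSEQ_imp_Cauchy[OF wl] this] obtain K where
        K: "\<forall>m\<ge>K. \<forall>n\<ge>K. norm (w m - w n) < e" by blast
      have le: "norm (y m - y n) \<le> norm (w m - w n)" for m n
      proof -
        have "w m - w n = f (y m) - f (y n)" by (simp only: y(2))
        also have "\<dots> = f (y m - y n)" by (rule f_diff[OF y(1) y(1)])
        finally show ?thesis using f_norm[OF DM_diff[OF y(1) y(1)], of m n] by simp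
      qed
      show "\<exists>K. \<forall>m\<ge>K. \<forall>n\<ge>K. norm (y m - y n) < e"
      proof (intro exI[of _ K] allI impI)
        fix m n assume "K \<le> m" "K \<le> n"
        then have "norm (w m - w n) < e" using K by blast
        then show "norm (y m - y n) < e" using le[of m n] by linarith
      qed
    qed
    then obtain a where ya: "y \<longlonglongrightarrow> a" using Cauchy_convergent_iff convergent_def by blast
    have "(\<lambda>n. (1/c) *\<^sub>R (y n - w n)) \<longlonglongrightarrow> (1/c) *\<^sub>R (a - l)" by (intro tendsto_intros ya wl)
    moreover have "(\<lambda>n. (1/c) *\<^sub>R (y n - w n)) = (\<lambda>n. M (y n))" using y c unfolding f_def by (simp add: fun_eq_iff)
    ultimately have "(\<lambda>n. M (y n)) \<longlonglongrightarrow> (1/c) *\<^sub>R (a - l)" by simp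
    from M_closed[OF y(1) ya this] have aD: "a \<in> DM" and Ma: "M a = (1/c) *\<^sub>R (a - l)" by auto
    have "f a = l" unfolding f_def Ma using c by simp
    then show "l \<in> L" unfolding L_def using aD by blast
  qed
  have "closure L = UNIV"
  proof (rule dense_from_orth[OF subL])
    fix z assume o: "\<forall>l\<in>L. inner z l = 0"
    have o2: "inner (M y) z = inner y ((1/c) *\<^sub>R z)" if y: "y \<in> DM" for y
    proof -
      have "f y \<in> L" unfolding L_def using y by (rule imageI)
      then have "inner z (f y) = 0" using o by blast
      then have h: "inner z y = c * inner (M y) z" unfolding f_def by (simp add: inner_diff_right inner_commute)
      have "inner (M y) z = (1/c) * (c * inner (M y) z)" using c by simp
      also have "\<dots> = (1/c) * inner z y" by (simp only: h)
      finally show ?thesis by (simp add: inner_commute)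
    qed
    have ex: "\<exists>z'. \<forall>x\<in>DM. inner (M x) z = inner x z'" using o2 by blast
    have zD: "z \<in> DM" by (rule adj_char[THEN iffD2, OF ex])
    have "inner y ((1/c) *\<^sub>R z + M z) = 0" if y: "y \<in> DM" for y
    proof -
      have "inner y ((1/c) *\<^sub>R z + M z) = inner y ((1/c) *\<^sub>R z) + inner y (M z)" by (rule inner_add_right)
      also have "\<dots> = inner (M y) z + inner y (M z)" by (simp only: o2[OF y])
      also have "\<dots> = 0" using M_skew[OF y zD] by simp
      finally show ?thesis .
    qed
    then have e: "(1/c) *\<^sub>R z + M z = 0" by (intro dense_orth_zero[OF dense]) blast
    have "M z = ((1/c) *\<^sub>R z + M z) - (1/c) *\<^sub>R z" by simp
    also have "\<dots> = - ((1/c) *\<^sub>R z)" by (simp only: e) simp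
    finally have Mz: "M z = - ((1/c) *\<^sub>R z)" .
    have "0 = inner (M z) z" by (rule Mx_x[OF zD, symmetric])
    also have "\<dots> = - ((1/c) * inner z z)" by (simp add: Mz)
    finally have "(1/c) * inner z z = 0" by simp
    then show "z = 0" using c by simp
  qed
  moreover have "closure L = L" using clL by (rule closure_closed)
  ultimately have "x \<in> L" by simp
  then show ?thesis unfolding L_def f_def by blast
qed

lemma res_unique:
  assumes c: "c \<noteq> 0" and y1: "y1 \<in> DM" "y1 - c *\<^sub>R M y1 = x" and y2: "y2 \<in> DM" "y2 - c *\<^sub>R M y2 = x"
  shows "y1 = y2"
proof -
  have d: "y1 - y2 \<in> DM" using y1 y2 by (simp add: DM_diff)
  have "(y1 - y2) - c *\<^sub>R M (y1 - y2) = (y1 - c *\<^sub>R M y1) - (y2 - c *\<^sub>R M y2)"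
    by (simp add: M_diff[OF y1(1) y2(1)] algebra_simps)
  also have "\<dots> = 0" using y1(2) y2(2) by simp
  finally have "(y1 - y2) - c *\<^sub>R M (y1 - y2) = 0" .
  then have "(norm (y1 - y2))^2 + c^2 * (norm (M (y1 - y2)))^2 = 0" using norm_res_sq[OF d, of c] by simp
  moreover have "0 \<le> c^2 * (norm (M (y1 - y2)))^2" by simp
  moreover have "0 \<le> (norm (y1 - y2))^2" by simp
  ultimately have "(norm (y1 - y2))^2 = 0" by linarith
  then show ?thesis by simp
qed

definition res :: "real \<Rightarrow> 'v \<Rightarrow> 'v" where "res c = Ttau M DM (2 * c)"

lemma Ttau_res: "Ttau M DM t = res (t / 2)" unfolding res_def by simp

lemma res_prop:
  assumes c: "c \<noteq> 0"
  shows "res c x \<in> DM \<and> res c x - c *\<^sub>R M (res c x) = x"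
proof -
  have ex: "\<exists>!y. y \<in> DM \<and> y - c *\<^sub>R M y = x"
  proof -
    obtain y where y: "y \<in> DM" "y - c *\<^sub>R M y = x" using res_exists[OF c, of x] by blast
    show ?thesis
    proof (rule ex1I[of _ y])
      show "y \<in> DM \<and> y - c *\<^sub>R M y = x" using y by simp
      fix y' assume y': "y' \<in> DM \<and> y' - c *\<^sub>R M y' = x"
      show "y' = y" by (rule res_unique[OF c conjunct1[OF y'] conjunct2[OF y'] y(1) y(2)])
    qed
  qed
  have "res c x = (THE y. y \<in> DM \<and> y - c *\<^sub>R M y = x)" unfolding res_def Ttau_def by simp
  then show ?thesis using theI'[OF ex] by simp
qed

lemma res_in: "c \<noteq> 0 \<Longrightarrow> res c x \<in> DM" by (rule conjunct1[OF res_prop])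
lemma res_eq: "c \<noteq> 0 \<Longrightarrow> res c x - c *\<^sub>R M (res c x) = x" by (rule conjunct2[OF res_prop])

lemma res_char: "c \<noteq> 0 \<Longrightarrow> y \<in> DM \<Longrightarrow> y - c *\<^sub>R M y = x \<Longrightarrow> res c x = y"
  by (rule res_unique[of c "res c x" x y]) (simp_all add: res_in res_eq)

lemma res_left: "c \<noteq> 0 \<Longrightarrow> y \<in> DM \<Longrightarrow> res c (y - c *\<^sub>R M y) = y"
  by (rule res_char) simp_all

lemma res_add: "c \<noteq> 0 \<Longrightarrow> res c (x + y) = res c x + res c y"
proof (rule res_char)
  assume c: "c \<noteq> 0"
  show "res c x + res c y \<in> DM" by (intro DM_add res_in c)
  have "res c x + res c y - c *\<^sub>R M (res c x + res c y)
     = (res c x - c *\<^sub>R M (res c x)) + (res c y - c *\<^sub>R M (res c y))"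
    by (simp add: M_add[OF res_in[OF c] res_in[OF c]] algebra_simps)
  also have "\<dots> = x + y" by (simp only: res_eq[OF c])
  finally show "res c x + res c y - c *\<^sub>R M (res c x + res c y) = x + y" .
qed

lemma res_scale: "c \<noteq> 0 \<Longrightarrow> res c (r *\<^sub>R x) = r *\<^sub>R res c x"
proof (rule res_char)
  assume c: "c \<noteq> 0"
  show "r *\<^sub>R res c x \<in> DM" by (rule DM_scale[OF res_in[OF c]])
  have "r *\<^sub>R res c x - c *\<^sub>R M (r *\<^sub>R res c x) = r *\<^sub>R (res c x - c *\<^sub>R M (res c x))"
    by (simp add: M_scale[OF res_in[OF c]] algebra_simps)
  then show "r *\<^sub>R res c x - c *\<^sub>R M (r *\<^sub>R res c x) = r *\<^sub>R x" by (simp add: res_eq[OF c])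
qed

lemma res_norm: "c \<noteq> 0 \<Longrightarrow> norm (res c x) \<le> norm x"
proof -
  assume c: "c \<noteq> 0"
  have "(norm (res c x))^2 \<le> (norm x)^2"
    using norm_res_sq[OF res_in[OF c, of x], of c] res_eq[OF c, of x] by simp
  then show ?thesis by (simp add: power2_le_iff_abs_le)
qed

lemma res_Mnorm: "c \<noteq> 0 \<Longrightarrow> norm (c *\<^sub>R M (res c x)) \<le> norm x"
proof -
  assume c: "c \<noteq> 0"
  have "(norm (c *\<^sub>R M (res c x)))^2 \<le> (norm x)^2"
    using norm_res_sq[OF res_in[OF c, of x], of c] res_eq[OF c, of x] by (simp add: power_mult_distrib)
  then show ?thesis by (simp add: power2_le_iff_abs_le)
qed

lemma res_bl: "c \<noteq> 0 \<Longrightarrow> bounded_linear (res c)"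
  by (rule bounded_linear_intro[where K=1]) (auto simp: res_add res_scale res_norm)

lemma res_M: "c \<noteq> 0 \<Longrightarrow> y \<in> DM \<Longrightarrow> M (res c y) \<in> DM \<and> M (res c y) = res c (M y)"
proof -
  assume c: "c \<noteq> 0" and y: "y \<in> DM"
  let ?w = "res c y"
  have wD: "?w \<in> DM" by (rule res_in[OF c])
  have e: "?w - c *\<^sub>R M ?w = y" by (rule res_eq[OF c])
  have "c *\<^sub>R M ?w = ?w - (?w - c *\<^sub>R M ?w)" by simp
  then have "c *\<^sub>R M ?w = ?w - y" by (simp only: e)
  then have cw: "c *\<^sub>R M ?w = ?w - y" .
  have "M ?w = (1/c) *\<^sub>R (c *\<^sub>R M ?w)" using c by simp
  also have "\<dots> = (1/c) *\<^sub>R (?w - y)" by (simp only: cw)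
  finally have Mw: "M ?w = (1/c) *\<^sub>R (?w - y)" .
  have MwD: "M ?w \<in> DM" unfolding Mw by (intro DM_scale DM_diff wD y)
  have "M ?w - c *\<^sub>R M (M ?w) = M (?w - c *\<^sub>R M ?w)"
    by (simp add: M_diff[OF wD DM_scale[OF MwD]] M_scale[OF MwD])
  also have "\<dots> = M y" by (simp add: res_eq[OF c])
  finally have "res c (M y) = M ?w" by (intro res_char[OF c MwD])
  then show ?thesis using MwD by simp
qed

lemma res_comm: "c \<noteq> 0 \<Longrightarrow> d \<noteq> 0 \<Longrightarrow> res c (res d x) = res d (res c x)"
proof -
  assume c: "c \<noteq> 0" and d: "d \<noteq> 0"
  let ?v = "res c (res d x)"
  have vD: "?v \<in> DM" by (rule res_in[OF c])
  have Mv: "M ?v \<in> DM" "M ?v = res c (M (res d x))" using res_M[OF c res_in[OF d, of x]] by auto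
  have e1: "?v - c *\<^sub>R M ?v = res d x" by (rule res_eq[OF c])
  have wD: "?v - d *\<^sub>R M ?v \<in> DM" by (intro DM_diff vD DM_scale Mv)
  have "(?v - d *\<^sub>R M ?v) - c *\<^sub>R M (?v - d *\<^sub>R M ?v)
      = (?v - c *\<^sub>R M ?v) - d *\<^sub>R M (?v - c *\<^sub>R M ?v)"
    by (simp add: M_diff[OF vD DM_scale[OF Mv(1)]] M_scale[OF Mv(1)] algebra_simps)
  also have "\<dots> = x" unfolding e1 by (rule res_eq[OF d])
  finally have "res c x = ?v - d *\<^sub>R M ?v" by (intro res_char[OF c wD])
  then have "res d (res c x) = ?v" by (simp add: res_left[OF d vD])
  then show ?thesis by simp
qed

lemma res_adj: "c \<noteq> 0 \<Longrightarrow> inner (res c x) z = inner x (res (-c) z)"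
proof -
  assume c: "c \<noteq> 0"
  have c': "-c \<noteq> 0" using c by simp
  define a where "a = res c x"
  define b where "b = res (-c) z"
  have aD: "a \<in> DM" unfolding a_def by (rule res_in[OF c])
  have bD: "b \<in> DM" unfolding b_def by (rule res_in[OF c'])
  have x: "x = a - c *\<^sub>R M a" unfolding a_def using res_eq[OF c, of x] by simp
  have z: "z = b + c *\<^sub>R M b" unfolding b_def using res_eq[OF c', of z] by simp
  have "inner a z = inner a b + c * inner a (M b)" unfolding z by (simp add: inner_add_right)
  also have "\<dots> = inner (a - c *\<^sub>R M a) b" using M_skew[OF aD bD] by (simp add: inner_diff_left)
  also have "\<dots> = inner x b" unfolding x ..
  finally show ?thesis unfolding a_def b_def .
qed

lemma res_Q:
  assumes c: "c \<noteq> 0" and Qbl: "bounded_linear Q" and QD: "Q ` DM \<subseteq> DM" and QM: "\<forall>w\<in>DM. Q (M w) = M (Q w)"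
  shows "Q (res c x) = res c (Q x)"
proof -
  interpret Q: bounded_linear Q by (rule Qbl)
  have rD: "res c x \<in> DM" by (rule res_in[OF c])
  have QrD: "Q (res c x) \<in> DM" using QD rD by blast
  have "Q (res c x) - c *\<^sub>R M (Q (res c x)) = Q (res c x - c *\<^sub>R M (res c x))"
    using QM rD by (simp add: Q.diff Q.scaleR)
  also have "\<dots> = Q x" by (simp add: res_eq[OF c])
  finally show ?thesis by (intro res_char[OF c QrD, symmetric])
qed

end


lemma funpow_commute:
  fixes f :: "'a \<Rightarrow> 'a"
  shows "(\<And>x. K (f x) = f (K x)) \<Longrightarrow> K ((f ^^ k) x) = (f ^^ k) (K x)"
  by (induction k) simp_all

lemma funpow_bl:
  fixes f :: "'a::real_normed_vector \<Rightarrow> 'a"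
  shows "bounded_linear f \<Longrightarrow> bounded_linear (f ^^ k)"
proof (induction k)
  case 0 then show ?case by (simp add: id_def bounded_linear_ident)
next
  case (Suc k) then show ?case by (simp add: bounded_linear_compose)
qed

lemma funpow_norm:
  fixes f :: "'a::real_normed_vector \<Rightarrow> 'a"
  shows "(\<And>x. norm (f x) = norm x) \<Longrightarrow> norm ((f ^^ k) x) = norm x"
  by (induction k) simp_all

lemma funpow_inv:
  fixes f :: "'a \<Rightarrow> 'a"
  shows "(\<And>x. g (f x) = x) \<Longrightarrow> (g ^^ k) ((f ^^ k) x) = x"
proof (induction k arbitrary: x)
  case (Suc k)
  have gs: "(g ^^ Suc k) y = (g ^^ k) (g y)" for y by (simp only: funpow_Suc_right o_apply)
  have "(g ^^ Suc k) ((f ^^ Suc k) x) = (g ^^ k) (g ((f ^^ Suc k) x))" by (rule gs)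
  also have "\<dots> = (g ^^ k) (g (f ((f ^^ k) x)))" by simp
  also have "\<dots> = x" using Suc by simp
  finally show ?case .
qed simp

context maxw begin

definition cay :: "real \<Rightarrow> 'v \<Rightarrow> 'v" where "cay c x = 2 *\<^sub>R res c x - x"

lemma cay_bl: "c \<noteq> 0 \<Longrightarrow> bounded_linear (cay c)"
  unfolding cay_def[abs_def]
  by (intro bounded_linear_sub bounded_linear_ident bounded_linear_compose[OF bounded_linear_scaleR_right res_bl])

lemma cay_alt: "c \<noteq> 0 \<Longrightarrow> cay c x = res c x + c *\<^sub>R M (res c x)"
proof -
  assume c: "c \<noteq> 0"
  have "cay c x = 2 *\<^sub>R res c x - (res c x - c *\<^sub>R M (res c x))" unfolding cay_def by (simp only: res_eq[OF c])
  then show ?thesis by (simp add: scaleR_2)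
qed

lemma cay_in: "c \<noteq> 0 \<Longrightarrow> x \<in> DM \<Longrightarrow> cay c x \<in> DM"
  unfolding cay_def by (intro DM_diff DM_scale res_in)

lemma Stau_cay:
  assumes t: "t \<noteq> 0" and x: "x \<in> DM"
  shows "Stau M DM t x = cay (t/2) x"
proof -
  let ?c = "t/2"
  have c: "?c \<noteq> 0" using t by simp
  have rD: "res ?c x \<in> DM" by (rule res_in[OF c])
  have vD: "2 *\<^sub>R res ?c x - x \<in> DM" by (intro DM_diff DM_scale rD x)
  have "(2 *\<^sub>R res ?c x - x) - ?c *\<^sub>R M (2 *\<^sub>R res ?c x - x)
      = 2 *\<^sub>R (res ?c x - ?c *\<^sub>R M (res ?c x)) - x + ?c *\<^sub>R M x"
    by (simp add: M_diff[OF DM_scale[OF rD] x] M_scale[OF rD] algebra_simps)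
  also have "\<dots> = x + ?c *\<^sub>R M x" by (simp only: res_eq[OF c]) (simp add: scaleR_2)
  finally have "res ?c (x + ?c *\<^sub>R M x) = 2 *\<^sub>R res ?c x - x" by (intro res_char[OF c vD])
  then show ?thesis unfolding Stau_def cay_def Ttau_res by simp
qed

lemma Stau_pow:
  assumes t: "t \<noteq> 0" and x: "x \<in> DM"
  shows "(Stau M DM t ^^ k) x = (cay (t/2) ^^ k) x \<and> (cay (t/2) ^^ k) x \<in> DM"
proof (induction k)
  case 0 then show ?case using x by simp
next
  case (Suc k)
  have c: "t/2 \<noteq> 0" using t by simp
  have "(Stau M DM t ^^ Suc k) x = Stau M DM t ((cay (t/2) ^^ k) x)" using Suc by simp
  also have "\<dots> = cay (t/2) ((cay (t/2) ^^ k) x)" using Suc by (intro Stau_cay t) simp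
  finally show ?case using cay_in[OF c] Suc by simp
qed

lemma cay_norm: "c \<noteq> 0 \<Longrightarrow> norm (cay c x) = norm x"
proof -
  assume c: "c \<noteq> 0"
  have rD: "res c x \<in> DM" by (rule res_in[OF c])
  have "(norm (cay c x))^2 = (norm (res c x))^2 + c^2 * (norm (M (res c x)))^2"
    unfolding cay_alt[OF c] by (rule norm_resp_sq[OF rD])
  also have "\<dots> = (norm (res c x - c *\<^sub>R M (res c x)))^2" by (rule norm_res_sq[OF rD, symmetric])
  also have "\<dots> = (norm x)^2" by (simp only: res_eq[OF c])
  finally show ?thesis by simp
qed

lemma cay_inv: "c \<noteq> 0 \<Longrightarrow> cay (-c) (cay c x) = x"
proof -
  assume c: "c \<noteq> 0"
  have c': "-c \<noteq> 0" using c by simp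
  have rD: "res c x \<in> DM" by (rule res_in[OF c])
  have "res (-c) (cay c x) = res c x"
    unfolding cay_alt[OF c] using res_left[OF c' rD] by simp
  then have "cay (-c) (cay c x) = 2 *\<^sub>R res c x - (res c x + c *\<^sub>R M (res c x))"
    unfolding cay_def[of "-c"] by (simp add: cay_alt[OF c])
  also have "\<dots> = res c x - c *\<^sub>R M (res c x)" by (simp add: scaleR_2)
  also have "\<dots> = x" by (rule res_eq[OF c])
  finally show ?thesis .
qed

lemma cay_M: "c \<noteq> 0 \<Longrightarrow> x \<in> DM \<Longrightarrow> M (cay c x) = cay c (M x)"
proof -
  assume c: "c \<noteq> 0" and x: "x \<in> DM"
  have rD: "res c x \<in> DM" by (rule res_in[OF c])
  have "M (cay c x) = 2 *\<^sub>R M (res c x) - M x"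
    unfolding cay_def by (simp add: M_diff[OF DM_scale[OF rD] x] M_scale[OF rD])
  also have "\<dots> = 2 *\<^sub>R res c (M x) - M x" using res_M[OF c x] by simp
  finally show ?thesis unfolding cay_def .
qed

lemma cay_res: "c \<noteq> 0 \<Longrightarrow> d \<noteq> 0 \<Longrightarrow> res d (cay c x) = cay c (res d x)"
proof -
  assume c: "c \<noteq> 0" and d: "d \<noteq> 0"
  interpret R: bounded_linear "res d" by (rule res_bl[OF d])
  show ?thesis unfolding cay_def by (simp add: R.diff R.scaleR res_comm[OF c d])
qed

lemma cay_adj: "c \<noteq> 0 \<Longrightarrow> inner (cay c x) z = inner x (cay (-c) z)"
proof -
  assume c: "c \<noteq> 0"
  show ?thesis unfolding cay_def by (simp add: inner_diff_left inner_diff_right res_adj[OF c])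
qed

lemma cay_Q:
  assumes c: "c \<noteq> 0" and Qbl: "bounded_linear Q" and QD: "Q ` DM \<subseteq> DM" and QM: "\<forall>w\<in>DM. Q (M w) = M (Q w)"
  shows "Q (cay c x) = cay c (Q x)"
proof -
  interpret Q: bounded_linear Q by (rule Qbl)
  show ?thesis unfolding cay_def by (simp add: Q.diff Q.scaleR res_Q[OF c Qbl QD QM])
qed

lemma cay_pow_DM: "c \<noteq> 0 \<Longrightarrow> x \<in> DM \<Longrightarrow> (cay c ^^ k) x \<in> DM \<and> M ((cay c ^^ k) x) = (cay c ^^ k) (M x)"
proof (induction k)
  case 0 then show ?case by simp
next
  case (Suc k)
  then show ?case by (simp add: cay_in cay_M)
qed

lemma cay_pow_norm: "c \<noteq> 0 \<Longrightarrow> norm ((cay c ^^ k) x) = norm x"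
  by (rule funpow_norm) (rule cay_norm)

lemma cay_pow_bl: "c \<noteq> 0 \<Longrightarrow> bounded_linear (cay c ^^ k)"
  by (rule funpow_bl[OF cay_bl])

end


locale maxw_grp = maxw M DM for M :: "'v::{real_inner,complete_space} \<Rightarrow> 'v" and DM +
  fixes S :: "real \<Rightarrow> 'v \<Rightarrow> 'v"
  assumes grp: "unitary_group_generated_by S M DM"
begin

lemma S_bl: "bounded_linear (S t)" using grp unfolding unitary_group_generated_by_def by blast
lemma S_0: "S 0 x = x" using grp unfolding unitary_group_generated_by_def by simp
lemma S_add: "S (s + t) x = S s (S t x)"
proof -
  have "S (s + t) = S s \<circ> S t" using grp unfolding unitary_group_generated_by_def by blast
  then show ?thesis by simp
qed
lemma S_norm: "norm (S t x) = norm x" using grp unfolding unitary_group_generated_by_def by blast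
lemma S_cont: "continuous_on UNIV (\<lambda>t. S t x)" using grp unfolding unitary_group_generated_by_def by blast
lemma S_gen: "x \<in> DM \<Longrightarrow> ((\<lambda>h. (1 / h) *\<^sub>R (S h x - x)) \<longlongrightarrow> M x) (at_right 0)"
  using grp unfolding unitary_group_generated_by_def by blast
lemma DM_char: "x \<in> DM \<longleftrightarrow> (\<exists>y. ((\<lambda>h. (1 / h) *\<^sub>R (S h x - x)) \<longlongrightarrow> y) (at_right 0))"
  using grp unfolding unitary_group_generated_by_def by blast

lemma S_comm: "S s (S t x) = S t (S s x)"
proof -
  have "S s (S t x) = S (s + t) x" by (rule S_add[symmetric])
  also have "s + t = t + s" by simp
  also have "S (t + s) x = S t (S s x)" by (rule S_add)
  finally show ?thesis .
qed

lemma S_inv: "S t (S (-t) x) = x"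
  using S_add[of t "-t" x] S_0 by simp

lemma S_inner: "inner (S t x) (S t y) = inner x y"
proof -
  interpret L: bounded_linear "S t" by (rule S_bl)
  have "(norm (S t (x + y)))^2 = (norm (x + y))^2" by (simp add: S_norm)
  then have "inner (S t x + S t y) (S t x + S t y) = inner (x + y) (x + y)"
    by (simp add: L.add power2_norm_eq_inner)
  moreover have "inner (S t x) (S t x) = inner x x" using S_norm[of t x] by (simp add: power2_norm_eq_inner[symmetric])
  moreover have "inner (S t y) (S t y) = inner y y" using S_norm[of t y] by (simp add: power2_norm_eq_inner[symmetric])
  moreover have "inner (a + b) (a + b) = inner a a + 2 * inner a b + inner b b" for a b :: 'v
    by (simp add: inner_add_left inner_add_right inner_commute)
  ultimately show ?thesis by (metis add_right_cancel add_left_cancel mult_left_cancel zero_neq_numeral)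
qed

lemma S_adj: "inner (S t x) y = inner x (S (-t) y)"
proof -
  have "inner (S t x) y = inner (S t x) (S t (S (-t) y))" by (simp add: S_inv)
  also have "\<dots> = inner x (S (-t) y)" by (rule S_inner)
  finally show ?thesis .
qed

lemma adj_unique:
  assumes "\<forall>x. inner (A x) y = inner x z"
  shows "adj A y = z"
  unfolding adj_def
proof (rule the_equality)
  show "\<forall>x. inner (A x) y = inner x z" by (rule assms)
  fix z' assume "\<forall>x. inner (A x) y = inner x z'"
  then have "inner x (z' - z) = 0" for x using assms by (simp add: inner_diff_right)
  then have "inner (z' - z) (z' - z) = 0" by blast
  then show "z' = z" by simp
qed

lemma adj_S: "adj (S t) y = S (-t) y"
  by (rule adj_unique) (simp add: S_adj)

lemma S_DM:
  assumes x: "x \<in> DM"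
  shows "S t x \<in> DM \<and> M (S t x) = S t (M x)"
proof -
  interpret L: bounded_linear "S t" by (rule S_bl)
  have "((\<lambda>h. S t ((1 / h) *\<^sub>R (S h x - x))) \<longlongrightarrow> S t (M x)) (at_right 0)"
    by (rule L.tendsto[OF S_gen[OF x]])
  moreover have "(\<lambda>h. S t ((1 / h) *\<^sub>R (S h x - x))) = (\<lambda>h. (1 / h) *\<^sub>R (S h (S t x) - S t x))"
    by (simp add: fun_eq_iff L.scaleR L.diff S_comm)
  ultimately have lim: "((\<lambda>h. (1 / h) *\<^sub>R (S h (S t x) - S t x)) \<longlongrightarrow> S t (M x)) (at_right 0)" by simp
  then have D: "S t x \<in> DM" using DM_char by blast
  have "((\<lambda>h. (1 / h) *\<^sub>R (S h (S t x) - S t x)) \<longlongrightarrow> M (S t x)) (at_right 0)" by (rule S_gen[OF D])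
  then have "M (S t x) = S t (M x)" using lim tendsto_unique trivial_limit_at_right_real by blast
  then show ?thesis using D by simp
qed

lemma S_deriv_quot:
  assumes x: "x \<in> DM"
  shows "((\<lambda>h. (1 / h) *\<^sub>R (S (t + h) x - S t x)) \<longlongrightarrow> S t (M x)) (at 0)"
proof (rule filterlim_split_at)
  interpret L: bounded_linear "S t" by (rule S_bl)
  have e1: "(\<lambda>h. (1 / h) *\<^sub>R (S (t + h) x - S t x)) = (\<lambda>h. S t ((1 / h) *\<^sub>R (S h x - x)))"
    by (simp add: fun_eq_iff L.scaleR L.diff S_add)
  show "((\<lambda>h. (1 / h) *\<^sub>R (S (t + h) x - S t x)) \<longlongrightarrow> S t (M x)) (at_right 0)"
    unfolding e1 by (rule L.tendsto[OF S_gen[OF x]])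
  show "((\<lambda>h. (1 / h) *\<^sub>R (S (t + h) x - S t x)) \<longlongrightarrow> S t (M x)) (at_left 0)"
  proof -
    define q where "q k = (1 / k) *\<^sub>R (S k x - x)" for k
    have q: "(q \<longlongrightarrow> M x) (at_right 0)" unfolding q_def by (rule S_gen[OF x])
    have e2: "(1 / (- k)) *\<^sub>R (S (t + - k) x - S t x) = S (t - k) (q k)" for k
    proof -
      interpret L2: bounded_linear "S (t - k)" by (rule S_bl)
      have "S t x = S (t - k) (S k x)" using S_add[of "t - k" k x] by simp
      then show ?thesis unfolding q_def by (simp add: L2.scaleR L2.diff algebra_simps)
    qed
    have c: "((\<lambda>k. S (t - k) (M x)) \<longlongrightarrow> S t (M x)) (at_right 0)"
    proof -
      have ic: "isCont (\<lambda>s. S s (M x)) t" using S_cont[of "M x"] by (simp add: continuous_on_eq_continuous_at)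
      have "((\<lambda>k. t - k) \<longlongrightarrow> t - 0) (at_right 0)" by (intro tendsto_intros)
      then have tk: "((\<lambda>k. t - k) \<longlongrightarrow> t) (at_right 0)" by simp
      show ?thesis by (rule isCont_tendsto_compose[OF ic tk])
    qed
    have d: "((\<lambda>k. S (t - k) (q k - M x)) \<longlongrightarrow> 0) (at_right 0)"
    proof -
      have "((\<lambda>k. q k - M x) \<longlongrightarrow> 0) (at_right 0)" using q by (rule LIM_zero)
      then have "((\<lambda>k. norm (q k - M x)) \<longlongrightarrow> 0) (at_right 0)" by (rule tendsto_norm_zero)
      then have "((\<lambda>k. norm (S (t - k) (q k - M x))) \<longlongrightarrow> 0) (at_right 0)" by (simp only: S_norm)
      then show ?thesis by (rule tendsto_norm_zero_cancel)
    qed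
    have "((\<lambda>k. S (t - k) (q k - M x) + S (t - k) (M x)) \<longlongrightarrow> 0 + S t (M x)) (at_right 0)"
      by (intro tendsto_add c d)
    moreover have "(\<lambda>k. S (t - k) (q k - M x) + S (t - k) (M x)) = (\<lambda>k. S (t - k) (q k))"
      by (simp add: fun_eq_iff linear_diff[OF bounded_linear.linear[OF S_bl]])
    ultimately have fin: "((\<lambda>k. S (t - k) (q k)) \<longlongrightarrow> S t (M x)) (at_right 0)" by simp
    have E: "(\<lambda>k. (1 / (- k)) *\<^sub>R (S (t + - k) x - S t x)) = (\<lambda>k. S (t - k) (q k))"
      by (rule ext) (rule e2)
    have fl: "((\<lambda>k. (1 / (- k)) *\<^sub>R (S (t + - k) x - S t x)) \<longlongrightarrow> S t (M x)) (at_right 0)"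
      unfolding E by (rule fin)
    show ?thesis
      apply (subst filterlim_at_left_to_right)
      apply (simp only: minus_zero)
      apply (rule fl)
      done
  qed
qed

lemma S_deriv:
  assumes x: "x \<in> DM"
  shows "((\<lambda>s. S s x) has_vector_derivative S t (M x)) (at t)"
  unfolding has_vector_derivative_def has_derivative_at
proof
  show "bounded_linear (\<lambda>h. h *\<^sub>R S t (M x))" by (rule bounded_linear_scaleR_left)
  let ?v = "S t (M x)"
  have "((\<lambda>h. (1 / h) *\<^sub>R (S (t + h) x - S t x) - ?v) \<longlongrightarrow> 0) (at 0)"
    by (rule LIM_zero[OF S_deriv_quot[OF x]])
  then have l: "((\<lambda>h. norm ((1 / h) *\<^sub>R (S (t + h) x - S t x) - ?v)) \<longlongrightarrow> 0) (at 0)"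
    by (rule tendsto_norm_zero)
  have ev: "\<forall>\<^sub>F h in at 0. norm ((1 / h) *\<^sub>R (S (t + h) x - S t x) - ?v)
        = norm (S (t + h) x - S t x - h *\<^sub>R ?v) / norm h"
  proof -
    have "norm ((1 / h) *\<^sub>R (S (t + h) x - S t x) - ?v) = norm (S (t + h) x - S t x - h *\<^sub>R ?v) / norm h"
      if h: "h \<noteq> 0" for h :: real
    proof -
      have "(1 / h) *\<^sub>R (S (t + h) x - S t x) - ?v = (1 / h) *\<^sub>R (S (t + h) x - S t x - h *\<^sub>R ?v)"
        using h by (simp add: scaleR_diff_right)
      then show ?thesis by (simp add: divide_inverse mult.commute)
    qed
    then show ?thesis by (simp add: eventually_at_filter)
  qed
  show "((\<lambda>h. norm (S (t + h) x - S t x - h *\<^sub>R ?v) / norm h) \<longlongrightarrow> 0) (at 0)"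
    by (rule Lim_transform_eventually[OF l ev])
qed

end


context maxw_grp begin

lemma S_lin: "S t (a - b) = S t a - S t b" "S t (a + b) = S t a + S t b" "S t (r *\<^sub>R a) = r *\<^sub>R S t a"
proof -
  interpret L: bounded_linear "S t" by (rule S_bl)
  show "S t (a - b) = S t a - S t b" "S t (a + b) = S t a + S t b" "S t (r *\<^sub>R a) = r *\<^sub>R S t a"
    by (simp_all add: L.diff L.add L.scaleR)
qed

lemma S_bound_lin:
  assumes x: "x \<in> DM" and h: "0 \<le> h"
    and B: "\<And>s. s \<in> {0..h} \<Longrightarrow> norm (S s (M x) - M x) \<le> B"
  shows "norm (S h x - x - h *\<^sub>R M x) \<le> h * B"
proof -
  have d: "\<And>s. s \<in> {0..h} \<Longrightarrow> ((\<lambda>s. S s x) has_vector_derivative S s (M x)) (at s within {0..h})"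
    by (rule has_vector_derivative_at_within[OF S_deriv[OF x]])
  have seg: "closed_segment 0 h \<subseteq> {0..h}" using h by (simp add: closed_segment_eq_real_ivl)
  have B': "\<And>s. s \<in> {0..h} \<Longrightarrow> norm (S s (M x) - S 0 (M x)) \<le> B" using B by (simp add: S_0)
  have "norm (S h x - S 0 x - (h - 0) *\<^sub>R S 0 (M x)) \<le> norm (h - 0) * B"
    by (rule vector_differentiable_bound_linearization[OF d seg B']) (use h in auto)
  then show ?thesis using h by (simp add: S_0)
qed

lemma S_bound1:
  assumes x: "x \<in> DM" and h: "0 \<le> h"
  shows "norm (S h x - x) \<le> 3 * h * norm (M x)"
proof -
  have "norm (S h x - x - h *\<^sub>R M x) \<le> h * (2 * norm (M x))"
  proof (rule S_bound_lin[OF x h])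
    fix s
    have "norm (S s (M x) - M x) \<le> norm (S s (M x)) + norm (M x)" by (rule norm_triangle_ineq4)
    then show "norm (S s (M x) - M x) \<le> 2 * norm (M x)" by (simp add: S_norm)
  qed
  moreover have "norm (S h x - x) \<le> norm (S h x - x - h *\<^sub>R M x) + norm (h *\<^sub>R M x)"
  proof -
    have "S h x - x = (S h x - x - h *\<^sub>R M x) + h *\<^sub>R M x" by simp
    then show ?thesis by (metis norm_triangle_ineq)
  qed
  ultimately show ?thesis using h by simp
qed

lemma S_bound2:
  assumes x: "x \<in> DM" and Mx: "M x \<in> DM" and h: "0 \<le> h"
  shows "norm (S h x - x - h *\<^sub>R M x) \<le> 3 * h^2 * norm (M (M x))"
proof -
  have "norm (S h x - x - h *\<^sub>R M x) \<le> h * (3 * h * norm (M (M x)))"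
  proof (rule S_bound_lin[OF x h])
    fix s assume s: "s \<in> {0..h}"
    have "norm (S s (M x) - M x) \<le> 3 * s * norm (M (M x))" using s by (intro S_bound1[OF Mx]) simp
    also have "\<dots> \<le> 3 * h * norm (M (M x))" using s by (intro mult_right_mono) auto
    finally show "norm (S s (M x) - M x) \<le> 3 * h * norm (M (M x))" .
  qed
  then show ?thesis by (simp add: power2_eq_square mult.assoc mult.left_commute)
qed

lemma cay_bound:
  assumes c: "c \<noteq> 0" and z: "z \<in> DM" and Mz: "M z \<in> DM"
  shows "norm (cay c z - z - (2 * c) *\<^sub>R M z) \<le> 2 * c^2 * norm (M (M z))"
proof -
  interpret R: bounded_linear "res c" by (rule res_bl[OF c])
  have wD: "z + c *\<^sub>R M z \<in> DM" by (intro DM_add z DM_scale Mz)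
  have Mw: "M (z + c *\<^sub>R M z) = M z + c *\<^sub>R M (M z)" by (simp add: M_add[OF z DM_scale[OF Mz]] M_scale[OF Mz])
  have "(z + c *\<^sub>R M z) - c *\<^sub>R M (z + c *\<^sub>R M z) = z - c^2 *\<^sub>R M (M z)"
    unfolding Mw by (simp add: algebra_simps power2_eq_square)
  then have "res c (z - c^2 *\<^sub>R M (M z)) = z + c *\<^sub>R M z" by (intro res_char[OF c wD])
  then have e: "res c z - z - c *\<^sub>R M z = c^2 *\<^sub>R res c (M (M z))"
    by (simp add: R.diff R.scaleR algebra_simps)
  have "cay c z - z - (2 * c) *\<^sub>R M z = 2 *\<^sub>R (res c z - z - c *\<^sub>R M z)"
    unfolding cay_def by (simp add: algebra_simps scaleR_2)
  also have "\<dots> = (2 * c^2) *\<^sub>R res c (M (M z))" by (simp add: e)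
  finally have "norm (cay c z - z - (2 * c) *\<^sub>R M z) = 2 * c^2 * norm (res c (M (M z)))" by simp
  also have "\<dots> \<le> 2 * c^2 * norm (M (M z))" by (intro mult_left_mono res_norm[OF c]) simp
  finally show ?thesis .
qed

lemma local_err:
  assumes t: "0 < t" and z: "z \<in> DM" and Mz: "M z \<in> DM"
  shows "norm (S t z - cay (t/2) z) \<le> 4 * t^2 * norm (M (M z))"
proof -
  have c: "t/2 \<noteq> 0" using t by simp
  have e: "S t z - cay (t/2) z = (S t z - z - t *\<^sub>R M z) - (cay (t/2) z - z - (2 * (t/2)) *\<^sub>R M z)" by simp
  have "norm (S t z - cay (t/2) z) \<le> norm (S t z - z - t *\<^sub>R M z) + norm (cay (t/2) z - z - (2 * (t/2)) *\<^sub>R M z)"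
    unfolding e by (rule norm_triangle_ineq4)
  also have "\<dots> \<le> 3 * t^2 * norm (M (M z)) + 2 * (t/2)^2 * norm (M (M z))"
  proof -
    have a: "norm (S t z - z - t *\<^sub>R M z) \<le> 3 * t^2 * norm (M (M z))"
      by (rule S_bound2[OF z Mz]) (use t in simp)
    have b: "norm (cay (t/2) z - z - (2 * (t/2)) *\<^sub>R M z) \<le> 2 * (t/2)^2 * norm (M (M z))"
      by (rule cay_bound[OF c z Mz])
    show ?thesis using a b by linarith
  qed
  also have "\<dots> = (7/2) * (t^2 * norm (M (M z)))" by (simp add: power2_eq_square algebra_simps)
  also have "\<dots> \<le> 4 * (t^2 * norm (M (M z)))" by (rule mult_right_mono) simp_all
  finally show ?thesis by (simp add: mult.assoc)
qed

lemma S_D2: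
  assumes y: "y \<in> DM" and My: "M y \<in> DM"
  shows "S t y \<in> DM \<and> M (S t y) \<in> DM \<and> norm (M (M (S t y))) = norm (M (M y))"
proof -
  have a: "S t y \<in> DM" "M (S t y) = S t (M y)" using S_DM[OF y] by auto
  have b: "S t (M y) \<in> DM" "M (S t (M y)) = S t (M (M y))" using S_DM[OF My] by auto
  show ?thesis using a b by (simp add: S_norm)
qed

lemma cn_err2:
  assumes y: "y \<in> DM" and My: "M y \<in> DM" and t: "0 < t"
  shows "norm (S (real N * t) y - (cay (t/2) ^^ N) y) \<le> real N * (4 * t^2 * norm (M (M y)))"
proof (induction N)
  case 0 then show ?case by (simp add: S_0)
next
  case (Suc N)
  have c: "t/2 \<noteq> 0" using t by simp
  interpret C: bounded_linear "cay (t/2)" by (rule cay_bl[OF c])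
  define z where "z = S (real N * t) y"
  have zz: "z \<in> DM" "M z \<in> DM" "norm (M (M z)) = norm (M (M y))" unfolding z_def using S_D2[OF y My] by auto
  have "S (real (Suc N) * t) y = S t z" unfolding z_def by (simp add: S_add[symmetric] algebra_simps)
  moreover have "(cay (t/2) ^^ Suc N) y = cay (t/2) ((cay (t/2) ^^ N) y)" by simp
  ultimately have e: "S (real (Suc N) * t) y - (cay (t/2) ^^ Suc N) y
      = (S t z - cay (t/2) z) + cay (t/2) (z - (cay (t/2) ^^ N) y)"
    by (simp add: C.diff)
  have "norm (S (real (Suc N) * t) y - (cay (t/2) ^^ Suc N) y)
      \<le> norm (S t z - cay (t/2) z) + norm (cay (t/2) (z - (cay (t/2) ^^ N) y))"
    unfolding e by (rule norm_triangle_ineq)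
  also have "norm (cay (t/2) (z - (cay (t/2) ^^ N) y)) = norm (z - (cay (t/2) ^^ N) y)"
    by (rule cay_norm[OF c])
  also have "\<dots> \<le> real N * (4 * t^2 * norm (M (M y)))" using Suc unfolding z_def .
  also have "norm (S t z - cay (t/2) z) \<le> 4 * t^2 * norm (M (M y))"
    using local_err[OF t zz(1) zz(2)] zz(3) by simp
  finally show ?case by (simp add: algebra_simps)
qed

lemma cn_err1:
  assumes y: "y \<in> DM" and t: "0 < t"
  shows "norm (S (real N * t) y - (cay (t/2) ^^ N) y) \<le> (2 + 4 * (real N * t)) * sqrt t * norm (M y)"
proof -
  define e where "e = sqrt t"
  have e0: "0 < e" unfolding e_def using t by simp
  have ee: "e * e = t" unfolding e_def using t by simp
  have en: "e \<noteq> 0" using e0 by simp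
  have c: "t/2 \<noteq> 0" using t by simp
  interpret C: bounded_linear "cay (t/2) ^^ N" by (rule cay_pow_bl[OF c])
  interpret SS: bounded_linear "S (real N * t)" by (rule S_bl)
  define y' where "y' = res e y"
  have y'D: "y' \<in> DM" unfolding y'_def by (rule res_in[OF en])
  have My': "M y' \<in> DM" "M y' = res e (M y)" unfolding y'_def using res_M[OF en y] by auto
  have nMMy': "e * norm (M (M y')) \<le> norm (M y)"
    using res_Mnorm[OF en, of "M y"] e0 unfolding My'(2) by simp
  have dy: "y - y' = - (e *\<^sub>R M y')"
    using res_eq[OF en, of y] unfolding y'_def by (simp add: algebra_simps)
  have ndy: "norm (y - y') \<le> e * norm (M y)"
    unfolding dy My'(2) using res_norm[OF en, of "M y"] e0 by (simp add: mult_left_mono)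
  define E where "E u = S (real N * t) u - (cay (t/2) ^^ N) u" for u
  have Elin: "E y = E y' + E (y - y')" unfolding E_def by (simp add: C.diff SS.diff)
  have E1: "norm (E (y - y')) \<le> 2 * (e * norm (M y))"
  proof -
    have "norm (E (y - y')) \<le> norm (S (real N * t) (y - y')) + norm ((cay (t/2) ^^ N) (y - y'))"
      unfolding E_def by (rule norm_triangle_ineq4)
    also have "\<dots> = 2 * norm (y - y')" by (simp add: S_norm cay_pow_norm[OF c])
    finally show ?thesis using ndy by simp
  qed
  have E2: "norm (E y') \<le> real N * (4 * t^2 * norm (M (M y')))"
    unfolding E_def by (rule cn_err2[OF y'D My'(1) t])
  also have "\<dots> \<le> real N * (4 * t^2 * (norm (M y) / e))"
    using nMMy' e0 by (intro mult_left_mono) (auto simp: field_simps)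
  also have "\<dots> = 4 * (real N * t) * e * norm (M y)"
    using ee en by (simp add: power2_eq_square field_simps)
  finally have E2': "norm (E y') \<le> 4 * (real N * t) * e * norm (M y)" .
  have "norm (E y) \<le> norm (E y') + norm (E (y - y'))" unfolding Elin by (rule norm_triangle_ineq)
  also have "\<dots> \<le> 4 * (real N * t) * e * norm (M y) + 2 * (e * norm (M y))" using E1 E2' by simp
  also have "\<dots> = (2 + 4 * (real N * t)) * e * norm (M y)" by (simp add: algebra_simps)
  finally show ?thesis unfolding E_def e_def .
qed

end


locale full = maxw_grp M DM S for M :: "'v::{real_inner,complete_space} \<Rightarrow> 'v" and DM S +
  fixes Q :: "'v \<Rightarrow> 'v"
  assumes Qbl: "bounded_linear Q" and Qsym: "symmetric_op Q" and Qpd: "pos_def_op Q"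
    and Qcomm: "commutes_with Q M DM"
begin

lemma QD: "Q ` DM \<subseteq> DM" using Qcomm unfolding commutes_with_def by blast
lemma QM: "\<forall>w\<in>DM. Q (M w) = M (Q w)" using Qcomm unfolding commutes_with_def by blast

lemma Qpos: "pos_op Q"
  unfolding pos_op_def
proof
  fix x
  show "0 \<le> inner (Q x) x"
  proof (cases "x = 0")
    case True
    then show ?thesis using linear_0[OF bounded_linear.linear[OF Qbl]] by simp
  next
    case False
    then show ?thesis using Qpd unfolding pos_def_op_def by (simp add: less_imp_le)
  qed
qed

definition RQ where "RQ = op_sqrt Q"

lemma RQ_bl: "bounded_linear RQ" unfolding RQ_def by (rule op_sqrt_props(1)[OF Qbl Qsym Qpos])
lemma RQ_sym: "symmetric_op RQ" unfolding RQ_def by (rule op_sqrt_props(2)[OF Qbl Qsym Qpos])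
lemma RQ_pos: "pos_op RQ" unfolding RQ_def by (rule op_sqrt_props(3)[OF Qbl Qsym Qpos])
lemma RQ_sq: "RQ (RQ x) = Q x" unfolding RQ_def by (rule op_sqrt_props(4)[OF Qbl Qsym Qpos])
lemma RQ_comm: "bounded_linear K \<Longrightarrow> (\<forall>x. K (Q x) = Q (K x)) \<Longrightarrow> K (RQ x) = RQ (K x)"
  unfolding RQ_def by (rule op_sqrt_props(5)[OF Qbl Qsym Qpos])

lemma RQ_lin: "RQ (a - b) = RQ a - RQ b" "RQ (a + b) = RQ a + RQ b" "RQ (r *\<^sub>R a) = r *\<^sub>R RQ a" "RQ 0 = 0"
proof -
  interpret L: bounded_linear RQ by (rule RQ_bl)
  show "RQ (a - b) = RQ a - RQ b" "RQ (a + b) = RQ a + RQ b" "RQ (r *\<^sub>R a) = r *\<^sub>R RQ a" "RQ 0 = 0"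
    by (simp_all add: L.diff L.add L.scaleR L.zero)
qed

lemma Q_lin: "Q (a - b) = Q a - Q b" "Q 0 = 0"
proof -
  interpret L: bounded_linear Q by (rule Qbl)
  show "Q (a - b) = Q a - Q b" "Q 0 = 0" by (simp_all add: L.diff L.zero)
qed

lemma Q_inj: "Q x = 0 \<Longrightarrow> x = 0"
  using Qpd unfolding pos_def_op_def by force

lemma RQ_inj: "RQ x = 0 \<Longrightarrow> x = 0"
proof -
  assume "RQ x = 0"
  then have "Q x = 0" using RQ_sq[of x] RQ_lin(4) by simp
  then show "x = 0" by (rule Q_inj)
qed

lemma RQ_res:
  assumes c: "c \<noteq> 0"
  shows "RQ (res c x) = res c (RQ x)"
proof -
  have "\<forall>x. res c (Q x) = Q (res c x)" using res_Q[OF c Qbl QD QM] by simp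
  then show ?thesis by (rule RQ_comm[OF res_bl[OF c], symmetric])
qed

lemma RQ_cay: "c \<noteq> 0 \<Longrightarrow> RQ (cay c x) = cay c (RQ x)"
  unfolding cay_def by (simp add: RQ_lin RQ_res)

lemma Q_S_pos:
  assumes t: "0 < t" and y: "y \<in> DM"
  shows "Q (S t y) = S t (Q y)"
proof -
  interpret QL: bounded_linear Q by (rule Qbl)
  have Qy: "Q y \<in> DM" using QD y by blast
  define D where "D = Q (S t y) - S t (Q y)"
  define K where "K = onorm Q * ((2 + 4 * t) * norm (M y)) + (2 + 4 * t) * norm (M (Q y))"
  have bnd: "norm D \<le> K * sqrt (t / real n)" if n: "n \<ge> 1" for n
  proof -
    define tau where "tau = t / real n"
    have tau: "0 < tau" unfolding tau_def using t n by simp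
    have c: "tau/2 \<noteq> 0" using tau by simp
    have nt: "real n * tau = t" unfolding tau_def using n by simp
    let ?C = "cay (tau/2) ^^ n"
    have QC: "Q (?C y) = ?C (Q y)" by (rule funpow_commute) (rule cay_Q[OF c Qbl QD QM])
    have e: "D = Q (S t y - ?C y) - (S t (Q y) - ?C (Q y))"
      unfolding D_def by (simp add: QL.diff QC)
    have "norm D \<le> norm (Q (S t y - ?C y)) + norm (S t (Q y) - ?C (Q y))"
      unfolding e by (rule norm_triangle_ineq4)
    also have "norm (Q (S t y - ?C y)) \<le> onorm Q * norm (S t y - ?C y)" by (rule onorm[OF Qbl])
    also have "norm (S t y - ?C y) \<le> (2 + 4 * t) * sqrt tau * norm (M y)"
      using cn_err1[OF y tau, of n] nt by simp
    also have "norm (S t (Q y) - ?C (Q y)) \<le> (2 + 4 * t) * sqrt tau * norm (M (Q y))"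
      using cn_err1[OF Qy tau, of n] nt by simp
    finally have "norm D \<le> onorm Q * ((2 + 4 * t) * sqrt tau * norm (M y)) + (2 + 4 * t) * sqrt tau * norm (M (Q y))"
      using onorm_pos_le[OF Qbl] by (simp add: mult_left_mono)
    also have "\<dots> = K * sqrt tau" unfolding K_def by (simp add: algebra_simps)
    finally show ?thesis unfolding tau_def .
  qed
  have lim: "(\<lambda>n. K * sqrt (t / real n)) \<longlonglongrightarrow> K * sqrt 0"
    by (intro tendsto_intros lim_const_over_n)
  have "norm D \<le> K * sqrt 0"
    by (rule LIMSEQ_le[OF tendsto_const lim]) (use bnd in blast)
  then have "D = 0" by simp
  then show ?thesis unfolding D_def by simp
qed

lemma Q_S_DM:
  assumes y: "y \<in> DM"
  shows "Q (S t y) = S t (Q y)"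
proof (cases "0 < t")
  case True then show ?thesis by (rule Q_S_pos[OF _ y])
next
  case False
  show ?thesis
  proof (cases "t = 0")
    case True then show ?thesis by (simp add: S_0)
  next
    case False
    then have t': "0 < - t" using \<open>\<not> 0 < t\<close> by simp
    have Sy: "S t y \<in> DM" using S_DM[OF y] by blast
    have "Q (S t y) = S t (S (-t) (Q (S t y)))" by (simp add: S_inv)
    also have "S (-t) (Q (S t y)) = Q (S (-t) (S t y))" by (rule Q_S_pos[OF t' Sy, symmetric])
    also have "S (-t) (S t y) = y" using S_inv[of "-t" y] by simp
    finally show ?thesis .
  qed
qed

lemma Q_S: "Q (S t x) = S t (Q x)"
proof -
  let ?A = "{x. Q (S t x) = S t (Q x)}"
  have "closed ?A"
  proof (rule closed_Collect_eq)
    show "continuous_on UNIV (\<lambda>x. Q (S t x))"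
      by (rule linear_continuous_on[OF bounded_linear_compose[OF Qbl S_bl]])
    show "continuous_on UNIV (\<lambda>x. S t (Q x))"
      by (rule linear_continuous_on[OF bounded_linear_compose[OF S_bl Qbl]])
  qed
  moreover have "DM \<subseteq> ?A" using Q_S_DM by blast
  ultimately have "closure DM \<subseteq> ?A" by (rule closure_minimal[rotated])
  then show ?thesis using dense by blast
qed

lemma RQ_S: "RQ (S t x) = S t (RQ x)"
  by (rule RQ_comm[OF S_bl, symmetric]) (simp add: Q_S)

end


context full begin

lemma QT_eq:
  assumes T: "0 \<le> T"
  shows "QT S Q T = (\<lambda>x. T *\<^sub>R Q x)"
proof
  fix x
  have "(\<lambda>r. S r (Q (adj (S r) x))) = (\<lambda>r. Q x)"
  proof
    fix r
    have "S r (Q (adj (S r) x)) = Q (S r (S (-r) x))" by (simp add: adj_S Q_S)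
    also have "\<dots> = Q x" by (simp add: S_inv)
    finally show "S r (Q (adj (S r) x)) = Q x" .
  qed
  then show "QT S Q T x = T *\<^sub>R Q x" unfolding QT_def using T by simp
qed

lemma rate_exact_eq:
  assumes T: "0 < T"
  shows "rate_exact S Q T (RQ b) (RQ a) = ereal ((1/2) * (norm (a - S T b))^2 / T)"
proof -
  define R where "R x = sqrt T *\<^sub>R RQ x" for x
  interpret RQL: bounded_linear RQ by (rule RQ_bl)
  have sT: "0 < sqrt T" using T by simp
  have Rbl: "bounded_linear R" unfolding R_def[abs_def]
    by (rule bounded_linear_compose[OF bounded_linear_scaleR_right RQ_bl])
  have Rsy: "symmetric_op R" using RQ_sym unfolding symmetric_op_def R_def by simp
  have Rpo: "pos_op R" using RQ_pos sT unfolding pos_op_def R_def by simp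
  have "op_sqrt (QT S Q T) = R"
  proof (rule op_sqrt_eq[OF Rbl Rsy Rpo])
    fix x
    show "QT S Q T x = R (R x)" unfolding QT_eq[OF less_imp_le[OF T]] R_def
      using T by (simp add: RQL.scaleR RQ_sq)
  qed
  moreover have "RQ a - S T (RQ b) = R ((1 / sqrt T) *\<^sub>R (a - S T b))"
    unfolding R_def using sT by (simp add: RQ_lin RQ_S)
  moreover have "rate R (R ((1 / sqrt T) *\<^sub>R (a - S T b))) = ereal ((1/2) * (norm ((1 / sqrt T) *\<^sub>R (a - S T b)))^2)"
  proof (rule rate_eq)
    fix y assume "R y = 0"
    then show "y = 0" unfolding R_def using sT RQ_inj by simp
  next
    fix u w show "R u - R w = R (u - w)" unfolding R_def by (simp add: RQ_lin algebra_simps)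
  qed simp
  moreover have "(norm ((1 / sqrt T) *\<^sub>R (a - S T b)))^2 = (norm (a - S T b))^2 / T"
    using T by (simp add: power_mult_distrib power_divide)
  ultimately show ?thesis unfolding rate_exact_def by simp
qed

lemma cay_pow_adj: "c \<noteq> 0 \<Longrightarrow> inner ((cay c ^^ k) u) x = inner u ((cay (-c) ^^ k) x)"
proof (induction k arbitrary: x)
  case 0 then show ?case by simp
next
  case (Suc k)
  have "inner ((cay c ^^ Suc k) u) x = inner (cay c ((cay c ^^ k) u)) x" by simp
  also have "\<dots> = inner ((cay c ^^ k) u) (cay (-c) x)" by (rule cay_adj[OF Suc.prems])
  also have "\<dots> = inner u ((cay (-c) ^^ k) (cay (-c) x))" by (rule Suc.IH[OF Suc.prems])
  also have "(cay (-c) ^^ k) (cay (-c) x) = (cay (-c) ^^ Suc k) x" by (simp add: funpow_swap1)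
  finally show ?case .
qed

lemma QTN_eq:
  assumes N: "N \<ge> 1" and T: "0 < T"
  defines "c \<equiv> T / real N / 2"
  shows "QTN M DM Q T N = (\<lambda>x. T *\<^sub>R res c (Q (res (-c) x)))"
proof
  fix x
  define tau where "tau = T / real N"
  have tau: "0 < tau" unfolding tau_def using N T by simp
  have c: "c \<noteq> 0" and c': "-c \<noteq> 0" unfolding c_def using N T by auto
  have ctau: "tau / 2 = c" unfolding c_def tau_def by simp
  define F where "F z = res c (Q (res (-c) z))" for z
  have Fc: "F (cay c z) = cay c (F z)" for z
    unfolding F_def by (simp add: cay_res[OF c c'] cay_Q[OF c Qbl QD QM] cay_res[OF c c])
  have Aeq: "((Stau M DM tau ^^ k) \<circ> Ttau M DM tau) = (\<lambda>u. (cay c ^^ k) (res c u))" for k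
  proof
    fix u
    have "res c u \<in> DM" by (rule res_in[OF c])
    then show "((Stau M DM tau ^^ k) \<circ> Ttau M DM tau) u = (cay c ^^ k) (res c u)"
      using Stau_pow[of tau "res c u" k] tau ctau by (simp add: Ttau_res)
  qed
  have adjA: "adj (\<lambda>u. (cay c ^^ k) (res c u)) z = res (-c) ((cay (-c) ^^ k) z)" for k z
    by (rule adj_unique) (simp add: cay_pow_adj[OF c] res_adj[OF c])
  have trm: "(cay c ^^ k) (res c (Q (res (-c) ((cay (-c) ^^ k) z)))) = F z" for k z
  proof -
    have "(cay c ^^ k) (F ((cay (-c) ^^ k) z)) = F ((cay c ^^ k) ((cay (-c) ^^ k) z))"
      by (rule funpow_commute[symmetric]) (rule Fc)
    also have "(cay c ^^ k) ((cay (-c) ^^ k) z) = z"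
      by (rule funpow_inv) (use cay_inv[OF c'] in simp)
    finally show ?thesis unfolding F_def .
  qed
  have "QTN M DM Q T N x = tau *\<^sub>R (\<Sum>j=1..N. F x)"
    unfolding QTN_def Let_def tau_def[symmetric] Aeq adjA trm ..
  also have "\<dots> = (tau * real N) *\<^sub>R F x" by (simp add: sum_constant_scaleR)
  also have "tau * real N = T" unfolding tau_def using N by simp
  finally show "QTN M DM Q T N x = T *\<^sub>R res c (Q (res (-c) x))" unfolding F_def .
qed

end


lemma gn1: "norm x \<le> graph_norm1 M x" "norm (M x) \<le> graph_norm1 M x"
  unfolding graph_norm1_def by (auto intro!: real_le_rsqrt)

lemma gn2: "norm x \<le> graph_norm2 M x" "norm (M x) \<le> graph_norm2 M x" "norm (M (M x)) \<le> graph_norm2 M x"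
  unfolding graph_norm2_def by (auto intro!: real_le_rsqrt)

lemma real_est:
  fixes X Y Z W p q c T :: real
  assumes "0 \<le> X" "0 \<le> Y" "0 \<le> Z" "\<bar>X - Y\<bar> \<le> W" "X \<le> p + q" "Y \<le> p + q" "Z \<le> p + q" "0 < T"
  shows "\<bar>(1/2) * X^2 / T - (1/2) * (Y^2 + c^2 * Z^2) / T\<bar> \<le> (W * 2 * (p + q) + c^2 * (p + q)^2) / (2 * T)"
proof -
  have "X^2 - Y^2 = (X - Y) * (X + Y)" by (simp add: power2_eq_square algebra_simps)
  then have "\<bar>X^2 - Y^2\<bar> = \<bar>X - Y\<bar> * (X + Y)" using assms(1,2) by (simp add: abs_mult)
  also have "\<dots> \<le> W * (2 * (p + q))" using assms by (intro mult_mono) auto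
  finally have h1: "\<bar>X^2 - Y^2\<bar> \<le> W * 2 * (p + q)" by (simp add: algebra_simps)
  have "Z^2 \<le> (p + q)^2" using assms by (intro power_mono) auto
  then have h2: "c^2 * Z^2 \<le> c^2 * (p + q)^2" by (intro mult_left_mono) auto
  have h3: "0 \<le> c^2 * Z^2" by simp
  have "\<bar>X^2 - (Y^2 + c^2 * Z^2)\<bar> \<le> W * 2 * (p + q) + c^2 * (p + q)^2"
    using h1 h2 h3 by linarith
  moreover have "(1/2) * X^2 / T - (1/2) * (Y^2 + c^2 * Z^2) / T = (X^2 - (Y^2 + c^2 * Z^2)) / (2 * T)"
    using assms(8) by (simp add: field_simps)
  ultimately show ?thesis using assms(8) by (simp add: abs_div divide_right_mono)
qed

context full begin

lemma rate_mid_eq: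
  assumes N: "N \<ge> 1" and T: "0 < T" and d: "d \<in> DM"
  defines "c \<equiv> T / real N / 2"
  shows "rate (op_sqrt (QTN M DM Q T N)) (RQ d) = ereal ((1/2) * ((norm d)^2 + c^2 * (norm (M d))^2) / T)"
proof -
  have c: "c \<noteq> 0" and c': "-c \<noteq> 0" unfolding c_def using N T by auto
  have sT: "0 < sqrt T" using T by simp
  interpret RQL: bounded_linear RQ by (rule RQ_bl)
  interpret R1: bounded_linear "res c" by (rule res_bl[OF c])
  interpret R2: bounded_linear "res (-c)" by (rule res_bl[OF c'])
  define Bo where "Bo u = sqrt T *\<^sub>R res c (RQ u)" for u
  define Bs where "Bs z = sqrt T *\<^sub>R RQ (res (-c) z)" for z
  have Bobl: "bounded_linear Bo" unfolding Bo_def[abs_def]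
    by (intro bounded_linear_compose[OF bounded_linear_scaleR_right] bounded_linear_compose[OF res_bl[OF c] RQ_bl])
  have Bsbl: "bounded_linear Bs" unfolding Bs_def[abs_def]
    by (intro bounded_linear_compose[OF bounded_linear_scaleR_right] bounded_linear_compose[OF RQ_bl res_bl[OF c']])
  have adj: "inner (Bo u) z = inner u (Bs z)" for u z
  proof -
    have "inner (Bo u) z = sqrt T * inner (RQ u) (res (-c) z)" unfolding Bo_def by (simp add: res_adj[OF c])
    also have "\<dots> = sqrt T * inner u (RQ (res (-c) z))" using RQ_sym unfolding symmetric_op_def by simp
    finally show ?thesis unfolding Bs_def by simp
  qed
  have Aeq: "QTN M DM Q T N x = Bo (Bs x)" for x
    unfolding QTN_eq[OF N T] c_def[symmetric] Bo_def Bs_def using T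
    by (simp add: RQL.scaleR R1.scaleR RQ_sq)
  have Abl: "bounded_linear (QTN M DM Q T N)"
    unfolding Aeq[abs_def] by (rule bounded_linear_compose[OF Bobl Bsbl])
  have Asy: "symmetric_op (QTN M DM Q T N)" unfolding symmetric_op_def Aeq
  proof (intro allI)
    fix x y
    have "inner (Bo (Bs x)) y = inner (Bs x) (Bs y)" by (rule adj)
    also have "\<dots> = inner x (Bo (Bs y))" using adj[of "Bs y" x] by (simp add: inner_commute)
    finally show "inner (Bo (Bs x)) y = inner x (Bo (Bs y))" .
  qed
  have Apo: "pos_op (QTN M DM Q T N)" unfolding pos_op_def Aeq by (simp add: adj)
  define R where "R = op_sqrt (QTN M DM Q T N)"
  note RP = op_sqrt_props[OF Abl Asy Apo, folded R_def]
  interpret RL: bounded_linear R by (rule RP(1))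
  have Boinj: "Bo z = 0 \<Longrightarrow> z = 0" for z
  proof -
    assume "Bo z = 0"
    then have "res c (RQ z) = 0" unfolding Bo_def using sT by simp
    then have "RQ z = 0" using res_eq[OF c, of "RQ z"] M_0 by simp
    then show "z = 0" by (rule RQ_inj)
  qed
  have dense: "closure (range Bs) = UNIV" by (rule dense_range_adj[OF Bsbl adj Boinj])
  define y where "y = (1 / sqrt T) *\<^sub>R (d - c *\<^sub>R M d)"
  obtain x where Rx: "R x = Bo y" and nx: "norm x = norm y"
    using sqrt_range_transfer[OF RP(1) RP(2) Bobl Bsbl adj _ dense, of y] RP(4) Aeq by metis
  have Boy: "Bo y = RQ d"
  proof -
    have "Bo y = res c (RQ (d - c *\<^sub>R M d))" unfolding Bo_def y_def using sT by (simp add: RQL.scaleR R1.scaleR)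
    also have "\<dots> = RQ (res c (d - c *\<^sub>R M d))" by (simp add: RQ_res[OF c])
    also have "\<dots> = RQ d" by (simp add: res_left[OF c d])
    finally show ?thesis .
  qed
  have Rinj: "R z = 0 \<Longrightarrow> z = 0" for z
  proof -
    assume "R z = 0"
    then have "inner (R (R z)) z = 0" by (simp add: RL.zero)
    then have "inner (Bs z) (Bs z) = 0" using RP(4)[of z] Aeq[of z] adj[of "Bs z" z] by simp
    then have "RQ (res (-c) z) = 0" unfolding Bs_def using sT by simp
    then have "res (-c) z = 0" by (rule RQ_inj)
    then show "z = 0" using res_eq[OF c', of z] M_0 by simp
  qed
  have "rate R (RQ d) = ereal ((1/2) * (norm x)^2)"
    by (rule rate_eq[OF Rinj]) (simp_all add: RL.diff Rx Boy)
  also have "(norm x)^2 = (norm (d - c *\<^sub>R M d))^2 / T"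
    unfolding nx y_def using T by (simp add: power_mult_distrib power_divide)
  also have "(norm (d - c *\<^sub>R M d))^2 = (norm d)^2 + c^2 * (norm (M d))^2" by (rule norm_res_sq[OF d])
  finally show ?thesis unfolding R_def by (simp add: mult.assoc)
qed

end


context full begin

lemma range_elt:
  assumes N: "N \<ge> 1" and T: "0 < T" and v: "v \<in> range (Ttau M DM (T / real N) \<circ> op_sqrt Q)"
  shows "pinv (op_sqrt Q) v \<in> DM \<and> RQ (pinv (op_sqrt Q) v) = v"
proof -
  define c where "c = T / real N / 2"
  have c: "c \<noteq> 0" unfolding c_def using N T by simp
  obtain xv where xv: "v = Ttau M DM (T / real N) (op_sqrt Q xv)" using v by auto
  then have v': "v = res c (RQ xv)" unfolding c_def Ttau_res RQ_def by simp
  have aD: "res c xv \<in> DM" by (rule res_in[OF c])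
  have Ra: "RQ (res c xv) = v" unfolding v' by (rule RQ_res[OF c])
  have "pinv RQ v = res c xv"
  proof (rule pinv_eq)
    show "\<And>y. RQ y = 0 \<Longrightarrow> y = 0" by (rule RQ_inj)
    show "\<And>a b. RQ a - RQ b = RQ (a - b)" by (simp add: RQ_lin)
    show "RQ (res c xv) = v" by (rule Ra)
  qed
  then show ?thesis using aD Ra unfolding RQ_def by simp
qed

lemma main_est:
  assumes N: "N \<ge> 1" and T: "0 < T"
    and v: "v \<in> range (Ttau M DM (T / real N) \<circ> op_sqrt Q)"
    and u: "u0 \<in> range (Ttau M DM (T / real N) \<circ> op_sqrt Q)"
    and pa: "norm (pinv (op_sqrt Q) v) \<le> p" "norm (M (pinv (op_sqrt Q) v)) \<le> p"
    and qb: "norm (pinv (op_sqrt Q) u0) \<le> q" "norm (M (pinv (op_sqrt Q) u0)) \<le> q"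
  shows "\<bar>rate_exact S Q T u0 v - rate_midpoint M DM Q T N u0 v\<bar>
    \<le> ereal ((norm (S (real N * (T / real N)) (pinv (op_sqrt Q) u0)
               - (cay (T / real N / 2) ^^ N) (pinv (op_sqrt Q) u0)) * 2 * (p + q)
             + (T / real N / 2)^2 * (p + q)^2) / (2 * T))"
proof -
  define a where "a = pinv (op_sqrt Q) v"
  define b where "b = pinv (op_sqrt Q) u0"
  define c where "c = T / real N / 2"
  have c: "c \<noteq> 0" unfolding c_def using N T by simp
  have NT: "real N * (T / real N) = T" using N by simp
  have aa: "a \<in> DM" "RQ a = v" using range_elt[OF N T v] unfolding a_def by auto
  have bb: "b \<in> DM" "RQ b = u0" using range_elt[OF N T u] unfolding b_def by auto
  let ?C = "cay c ^^ N"
  interpret CL: bounded_linear ?C by (rule cay_pow_bl[OF c])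
  have u0D: "u0 \<in> DM"
  proof -
    obtain xu where xu: "u0 = Ttau M DM (T / real N) (op_sqrt Q xu)" using u by auto
    have "res c (op_sqrt Q xu) \<in> DM" by (rule res_in[OF c])
    then show ?thesis using xu unfolding Ttau_res c_def by simp
  qed
  have Stp: "(Stau M DM (T / real N) ^^ N) u0 = ?C u0"
    using Stau_pow[of "T / real N" u0 N] u0D N T unfolding c_def by simp
  have RC: "?C (RQ b) = RQ (?C b)" by (rule funpow_commute[symmetric]) (rule RQ_cay[OF c])
  define d where "d = a - ?C b"
  have CbD: "?C b \<in> DM" "M (?C b) = ?C (M b)" using cay_pow_DM[OF c bb(1)] by auto
  have dD: "d \<in> DM" unfolding d_def by (intro DM_diff aa(1) CbD(1))
  have w2: "v - (Stau M DM (T / real N) ^^ N) u0 = RQ d"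
    unfolding Stp d_def using aa bb RC by (simp add: RQ_lin)
  have re: "rate_exact S Q T u0 v = ereal ((1/2) * (norm (a - S T b))^2 / T)"
    using rate_exact_eq[OF T, of b a] aa bb by simp
  have rm: "rate_midpoint M DM Q T N u0 v = ereal ((1/2) * ((norm d)^2 + c^2 * (norm (M d))^2) / T)"
    unfolding rate_midpoint_def w2 c_def by (rule rate_mid_eq[OF N T dD])
  define W where "W = norm (S T b - ?C b)"
  have X0: "0 \<le> norm (a - S T b)" by simp
  have XY: "\<bar>norm (a - S T b) - norm d\<bar> \<le> W"
  proof -
    have "\<bar>norm (a - S T b) - norm d\<bar> \<le> norm ((a - S T b) - d)" by (rule norm_triangle_ineq3)
    also have "(a - S T b) - d = - (S T b - ?C b)" unfolding d_def by simp
    finally show ?thesis unfolding W_def by (simp add: norm_minus_commute)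
  qed
  have Xb: "norm (a - S T b) \<le> p + q"
  proof -
    have "norm (a - S T b) \<le> norm a + norm (S T b)" by (rule norm_triangle_ineq4)
    then show ?thesis using pa qb unfolding a_def[symmetric] b_def[symmetric] by (simp add: S_norm)
  qed
  have Yb: "norm d \<le> p + q"
  proof -
    have "norm d \<le> norm a + norm (?C b)" unfolding d_def by (rule norm_triangle_ineq4)
    then show ?thesis using pa qb unfolding a_def[symmetric] b_def[symmetric] by (simp add: cay_pow_norm[OF c])
  qed
  have Zb: "norm (M d) \<le> p + q"
  proof -
    have "M d = M a - ?C (M b)" unfolding d_def using M_diff[OF aa(1) CbD(1)] CbD(2) by simp
    then have "norm (M d) \<le> norm (M a) + norm (?C (M b))" by (simp add: norm_triangle_ineq4)
    then show ?thesis using pa qb unfolding a_def[symmetric] b_def[symmetric] by (simp add: cay_pow_norm[OF c])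
  qed
  have est: "\<bar>(1/2) * (norm (a - S T b))^2 / T - (1/2) * ((norm d)^2 + c^2 * (norm (M d))^2) / T\<bar>
      \<le> (W * 2 * (p + q) + c^2 * (p + q)^2) / (2 * T)"
    by (rule real_est[OF X0 norm_ge_zero norm_ge_zero XY Xb Yb Zb T])
  show ?thesis unfolding re rm using est unfolding W_def NT a_def b_def c_def by simp
qed

end


theorem proposition3p6:
  fixes M :: "'v::{real_inner,complete_space} \<Rightarrow> 'v" and DM :: "'v set"
    and S :: "real \<Rightarrow> 'v \<Rightarrow> 'v" and Q :: "'v \<Rightarrow> 'v" and T :: real
  assumes T_pos: "T > 0"
    and skew: "skew_adjoint M DM"
    and group: "unitary_group_generated_by S M DM"
    and Q_bl: "bounded_linear Q" and Q_sym: "symmetric_op Q" and Q_pd: "pos_def_op Q"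
    and Q_tr: "trace_class_pos Q"
    and Q_comm: "commutes_with Q M DM"
  shows
    "(\<exists>C :: real \<Rightarrow> real \<Rightarrow> real. \<forall>N::nat. \<forall>v u0.
        N \<ge> 1 \<longrightarrow>
        v \<in> range (Ttau M DM (T / real N) \<circ> op_sqrt Q) \<longrightarrow>
        u0 \<in> range (Ttau M DM (T / real N) \<circ> op_sqrt Q) \<longrightarrow>
        \<bar>rate_exact S Q T u0 v - rate_midpoint M DM Q T N u0 v\<bar>
          \<le> ereal (C (graph_norm1 M (pinv (op_sqrt Q) v)) (graph_norm1 M (pinv (op_sqrt Q) u0))
                    * sqrt (T / real N)))
   \<and> (\<exists>C :: real \<Rightarrow> real \<Rightarrow> real. \<forall>N::nat. \<forall>v u0.
        N \<ge> 1 \<longrightarrow>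
        v \<in> range (Ttau M DM (T / real N) \<circ> op_sqrt Q) \<longrightarrow>
        u0 \<in> range (Ttau M DM (T / real N) \<circ> op_sqrt Q) \<longrightarrow>
        pinv (op_sqrt Q) v \<in> dom_M2 M DM \<longrightarrow>
        pinv (op_sqrt Q) u0 \<in> dom_M2 M DM \<longrightarrow>
        \<bar>rate_exact S Q T u0 v - rate_midpoint M DM Q T N u0 v\<bar>
          \<le> ereal (C (graph_norm2 M (pinv (op_sqrt Q) v)) (graph_norm2 M (pinv (op_sqrt Q) u0))
                    * (T / real N)))"
proof -
  interpret F: full M DM S Q
  proof -
    have m: "maxw M DM" by (rule maxw.intro[OF skew])
    have g: "maxw_grp M DM S" by (rule maxw_grp.intro[OF m maxw_grp_axioms.intro[OF group]])
    show "full M DM S Q" by (rule full.intro[OF g full_axioms.intro[OF Q_bl Q_sym Q_pd Q_comm]])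
  qed
  have sT: "0 \<le> sqrt T" using T_pos by simp
  define C1 where "C1 p q = ((2 + 4 * T) * q * 2 * (p + q) + T * sqrt T / 4 * (p + q)^2) / (2 * T)" for p q
  define C2 where "C2 p q = (4 * T * q * 2 * (p + q) + T / 4 * (p + q)^2) / (2 * T)" for p q
  have part1: "\<forall>N::nat. \<forall>v u0.
        N \<ge> 1 \<longrightarrow>
        v \<in> range (Ttau M DM (T / real N) \<circ> op_sqrt Q) \<longrightarrow>
        u0 \<in> range (Ttau M DM (T / real N) \<circ> op_sqrt Q) \<longrightarrow>
        \<bar>rate_exact S Q T u0 v - rate_midpoint M DM Q T N u0 v\<bar>
          \<le> ereal (C1 (graph_norm1 M (pinv (op_sqrt Q) v)) (graph_norm1 M (pinv (op_sqrt Q) u0))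
                    * sqrt (T / real N))"
  proof (intro allI impI)
    fix N :: nat and v u0
    assume N: "N \<ge> 1" and v: "v \<in> range (Ttau M DM (T / real N) \<circ> op_sqrt Q)"
      and u: "u0 \<in> range (Ttau M DM (T / real N) \<circ> op_sqrt Q)"
    define a where "a = pinv (op_sqrt Q) v"
    define b where "b = pinv (op_sqrt Q) u0"
    define p where "p = graph_norm1 M a"
    define q where "q = graph_norm1 M b"
    define tau where "tau = T / real N"
    have tau: "0 < tau" unfolding tau_def using N T_pos by simp
    have tauT: "tau \<le> T" unfolding tau_def using N T_pos by (simp add: divide_le_eq_1_pos field_simps)
    have NT: "real N * tau = T" unfolding tau_def using N by simp
    have bD: "b \<in> DM" unfolding b_def using F.range_elt[OF N T_pos u] by blast
    have p0: "0 \<le> p" "norm a \<le> p" "norm (M a) \<le> p" unfolding p_def using gn1[where x=a and M=M] by (auto intro: order_trans[OF norm_ge_zero])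
    have q0: "0 \<le> q" "norm b \<le> q" "norm (M b) \<le> q" unfolding q_def using gn1[where x=b and M=M] by (auto intro: order_trans[OF norm_ge_zero])
    have me: "\<bar>rate_exact S Q T u0 v - rate_midpoint M DM Q T N u0 v\<bar>
      \<le> ereal ((norm (S (real N * tau) b - (F.cay (tau / 2) ^^ N) b) * 2 * (p + q)
             + (tau / 2)^2 * (p + q)^2) / (2 * T))"
      using F.main_est[OF N T_pos v u, of p q] p0 q0 unfolding a_def b_def tau_def by simp
    have W: "norm (S (real N * tau) b - (F.cay (tau / 2) ^^ N) b) \<le> (2 + 4 * T) * sqrt tau * q"
    proof -
      have "norm (S (real N * tau) b - (F.cay (tau / 2) ^^ N) b) \<le> (2 + 4 * (real N * tau)) * sqrt tau * norm (M b)"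
        by (rule F.cn_err1[OF bD tau])
      also have "\<dots> \<le> (2 + 4 * T) * sqrt tau * q" unfolding NT using q0 T_pos tau
        by (intro mult_left_mono) auto
      finally show ?thesis .
    qed
    have tt: "tau^2 \<le> T * sqrt T * sqrt tau"
    proof -
      have "tau * sqrt tau \<le> T * sqrt T" using tau tauT by (intro mult_mono) auto
      then have "tau * sqrt tau * sqrt tau \<le> T * sqrt T * sqrt tau" using tau by (intro mult_right_mono) auto
      moreover have "tau * sqrt tau * sqrt tau = tau^2" using tau by (simp add: power2_eq_square mult.assoc)
      ultimately show ?thesis by simp
    qed
    have pq: "0 \<le> p + q" using p0 q0 by simp
    have "(norm (S (real N * tau) b - (F.cay (tau / 2) ^^ N) b) * 2 * (p + q) + (tau / 2)^2 * (p + q)^2) / (2 * T)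
        \<le> (((2 + 4 * T) * sqrt tau * q) * 2 * (p + q) + (T * sqrt T * sqrt tau / 4) * (p + q)^2) / (2 * T)"
    proof (rule divide_right_mono)
      have "norm (S (real N * tau) b - (F.cay (tau / 2) ^^ N) b) * 2 * (p + q) \<le> ((2 + 4 * T) * sqrt tau * q) * 2 * (p + q)"
        using W pq by (intro mult_right_mono) auto
      moreover have "(tau / 2)^2 * (p + q)^2 \<le> (T * sqrt T * sqrt tau / 4) * (p + q)^2"
        using tt by (intro mult_right_mono) (auto simp: power_divide)
      ultimately show "norm (S (real N * tau) b - (F.cay (tau / 2) ^^ N) b) * 2 * (p + q) + (tau / 2)^2 * (p + q)^2
          \<le> ((2 + 4 * T) * sqrt tau * q) * 2 * (p + q) + (T * sqrt T * sqrt tau / 4) * (p + q)^2" by simp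
    qed (use T_pos in simp)
    also have "\<dots> = C1 p q * sqrt tau" unfolding C1_def by (simp add: field_simps)
    finally have "(norm (S (real N * tau) b - (F.cay (tau / 2) ^^ N) b) * 2 * (p + q) + (tau / 2)^2 * (p + q)^2) / (2 * T)
        \<le> C1 p q * sqrt tau" .
    then show "\<bar>rate_exact S Q T u0 v - rate_midpoint M DM Q T N u0 v\<bar>
          \<le> ereal (C1 (graph_norm1 M (pinv (op_sqrt Q) v)) (graph_norm1 M (pinv (op_sqrt Q) u0))
                    * sqrt (T / real N))"
      using me unfolding p_def q_def a_def b_def tau_def by (meson ereal_less_eq(3) order_trans)
  qed
  have part2: "\<forall>N::nat. \<forall>v u0.
        N \<ge> 1 \<longrightarrow>
        v \<in> range (Ttau M DM (T / real N) \<circ> op_sqrt Q) \<longrightarrow>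
        u0 \<in> range (Ttau M DM (T / real N) \<circ> op_sqrt Q) \<longrightarrow>
        pinv (op_sqrt Q) v \<in> dom_M2 M DM \<longrightarrow>
        pinv (op_sqrt Q) u0 \<in> dom_M2 M DM \<longrightarrow>
        \<bar>rate_exact S Q T u0 v - rate_midpoint M DM Q T N u0 v\<bar>
          \<le> ereal (C2 (graph_norm2 M (pinv (op_sqrt Q) v)) (graph_norm2 M (pinv (op_sqrt Q) u0))
                    * (T / real N))"
  proof (intro allI impI)
    fix N :: nat and v u0
    assume N: "N \<ge> 1" and v: "v \<in> range (Ttau M DM (T / real N) \<circ> op_sqrt Q)"
      and u: "u0 \<in> range (Ttau M DM (T / real N) \<circ> op_sqrt Q)"
      and a2: "pinv (op_sqrt Q) v \<in> dom_M2 M DM" and b2: "pinv (op_sqrt Q) u0 \<in> dom_M2 M DM"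
    define a where "a = pinv (op_sqrt Q) v"
    define b where "b = pinv (op_sqrt Q) u0"
    define p where "p = graph_norm2 M a"
    define q where "q = graph_norm2 M b"
    define tau where "tau = T / real N"
    have tau: "0 < tau" unfolding tau_def using N T_pos by simp
    have tauT: "tau \<le> T" unfolding tau_def using N T_pos by (simp add: divide_le_eq_1_pos field_simps)
    have NT: "real N * tau = T" unfolding tau_def using N by simp
    have bD: "b \<in> DM" "M b \<in> DM" using b2 unfolding b_def dom_M2_def by auto
    have p0: "0 \<le> p" "norm a \<le> p" "norm (M a) \<le> p" unfolding p_def using gn2[where x=a and M=M] by (auto intro: order_trans[OF norm_ge_zero])
    have q0: "0 \<le> q" "norm b \<le> q" "norm (M b) \<le> q" "norm (M (M b)) \<le> q" unfolding q_def using gn2[where x=b and M=M] by (auto intro: order_trans[OF norm_ge_zero])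
    have me: "\<bar>rate_exact S Q T u0 v - rate_midpoint M DM Q T N u0 v\<bar>
      \<le> ereal ((norm (S (real N * tau) b - (F.cay (tau / 2) ^^ N) b) * 2 * (p + q)
             + (tau / 2)^2 * (p + q)^2) / (2 * T))"
      using F.main_est[OF N T_pos v u, of p q] p0 q0 unfolding a_def b_def tau_def by simp
    have W: "norm (S (real N * tau) b - (F.cay (tau / 2) ^^ N) b) \<le> 4 * T * tau * q"
    proof -
      have "norm (S (real N * tau) b - (F.cay (tau / 2) ^^ N) b) \<le> real N * (4 * tau^2 * norm (M (M b)))"
        by (rule F.cn_err2[OF bD tau])
      also have "\<dots> = 4 * (real N * tau) * tau * norm (M (M b))" by (simp add: power2_eq_square algebra_simps)
      also have "\<dots> \<le> 4 * T * tau * q" unfolding NT using q0 T_pos tau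
        by (intro mult_left_mono) auto
      finally show ?thesis .
    qed
    have tt: "tau^2 \<le> T * tau" using tau tauT by (simp add: power2_eq_square mult_right_mono)
    have pq: "0 \<le> p + q" using p0 q0 by simp
    have "(norm (S (real N * tau) b - (F.cay (tau / 2) ^^ N) b) * 2 * (p + q) + (tau / 2)^2 * (p + q)^2) / (2 * T)
        \<le> ((4 * T * tau * q) * 2 * (p + q) + (T * tau / 4) * (p + q)^2) / (2 * T)"
    proof (rule divide_right_mono)
      have "norm (S (real N * tau) b - (F.cay (tau / 2) ^^ N) b) * 2 * (p + q) \<le> (4 * T * tau * q) * 2 * (p + q)"
        using W pq by (intro mult_right_mono) auto
      moreover have "(tau / 2)^2 * (p + q)^2 \<le> (T * tau / 4) * (p + q)^2"
        using tt by (intro mult_right_mono) (auto simp: power_divide)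
      ultimately show "norm (S (real N * tau) b - (F.cay (tau / 2) ^^ N) b) * 2 * (p + q) + (tau / 2)^2 * (p + q)^2
          \<le> (4 * T * tau * q) * 2 * (p + q) + (T * tau / 4) * (p + q)^2" by (rule add_mono)
    qed (use T_pos in simp)
    also have "\<dots> = C2 p q * tau" unfolding C2_def by (simp add: field_simps)
    finally have "(norm (S (real N * tau) b - (F.cay (tau / 2) ^^ N) b) * 2 * (p + q) + (tau / 2)^2 * (p + q)^2) / (2 * T)
        \<le> C2 p q * tau" .
    then show "\<bar>rate_exact S Q T u0 v - rate_midpoint M DM Q T N u0 v\<bar>
          \<le> ereal (C2 (graph_norm2 M (pinv (op_sqrt Q) v)) (graph_norm2 M (pinv (op_sqrt Q) u0))
                    * (T / real N))"
      using me unfolding p_def q_def a_def b_def tau_def by (meson ereal_less_eq(3) order_trans)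
  qed
  show ?thesis using part1 part2 by blast
qed


end
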